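(* Let $G$ be a finitely generated group and let $F$ be the free group with basis $\{x,y,z\}$. (i) If the fixed-target submonoid membership problem for the element $xy^{-1}$ in the free product $G\ast F$ is decidable, then the rational subset membership problem in $G$ is decidable. (ii) If there is an algorithm which, given a finite subset $\Delta\subseteq G\ast F$, decides whether $\mathrm{Sgp}(xy^{-1})\cap\mathrm{Sgp}(\Delta)=\varnothing$ in $G\ast F$, then the rational subset membership problem in $G$ is decidable.
   Context: For a group $H$ with finite generating set $A$ and canonical surjection $\pi:(A\cup A^{-1})^*\to H$: $\mathrm{Mon}(X)$ and $\mathrm{Sgp}(X)$ denote the submonoid and subsemigroup generated by $X$. The fixed-target submonoid membership problem for a fixed element $\gamma\in H$ asks, on input a finite set $X$ of words, whether $\gamma\in\mathrm{Mon}(\pi(X))$. A subset of $H$ is rational if it equals $\pi(L)$ for some regular language $L$; the rational subset membership problem asks, given a finite automaton $\mathcal A$ and a word $w$, whether $\pi(w)\in\pi(L(\mathcal A))$. *)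

theory Defs
  imports "HOL-Algebra.Generated_Groups" "HOL-Library.Nat_Bijection"
begin

datatype recf = Zero | Succ | Proj nat | Comp recf "recf list"
  | Prim recf recf | Mini recf

inductive eval :: "recf \<Rightarrow> nat list \<Rightarrow> nat \<Rightarrow> bool" where
  eval_Zero: "eval Zero xs 0"
| eval_Succ: "eval Succ (x # xs) (Suc x)"
| eval_Proj: "i < length xs \<Longrightarrow> eval (Proj i) xs (xs ! i)"
| eval_Comp: "list_all2 (\<lambda>g y. eval g xs y) gs ys \<Longrightarrow> eval f ys z \<Longrightarrow> eval (Comp f gs) xs z"
| eval_Prim0: "eval f xs y \<Longrightarrow> eval (Prim f g) (0 # xs) y"
| eval_PrimS: "eval (Prim f g) (n # xs) r \<Longrightarrow> eval g (n # r # xs) y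
     \<Longrightarrow> eval (Prim f g) (Suc n # xs) y"
| eval_Mini: "eval f (n # xs) 0 \<Longrightarrow> (\<forall>m<n. \<exists>v. eval f (m # xs) (Suc v))
     \<Longrightarrow> eval (Mini f) xs n"

definition decidable :: "('x \<Rightarrow> nat) \<Rightarrow> 'x set \<Rightarrow> ('x \<Rightarrow> bool) \<Rightarrow> bool" where
  "decidable enc V P \<longleftrightarrow> (\<exists>r. \<forall>x\<in>V. eval r [enc x] (if P x then 1 else 0))"

text \<open>A letter (i, b) is the i-th generator, inverted iff b = True.\<close>
type_synonym letter = "nat \<times> bool"
type_synonym word = "letter list"

fun enc_list :: "nat list \<Rightarrow> nat" where
  "enc_list [] = 0"
| "enc_list (x # xs) = Suc (prod_encode (x, enc_list xs))"

definition enc_letter :: "letter \<Rightarrow> nat" where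
  "enc_letter l = prod_encode (fst l, if snd l then 1 else 0)"

definition enc_word :: "word \<Rightarrow> nat" where
  "enc_word w = enc_list (map enc_letter w)"

definition enc_words :: "word list \<Rightarrow> nat" where
  "enc_words ws = enc_list (map enc_word ws)"

definition word_over :: "nat \<Rightarrow> word \<Rightarrow> bool" where
  "word_over k w \<longleftrightarrow> (\<forall>l\<in>set w. fst l < k)"

text \<open>Finite automaton: transitions (p, a, q), initial states, final states.\<close>
type_synonym nfa = "(nat \<times> letter \<times> nat) list \<times> nat list \<times> nat list"

fun nfa_path :: "(nat \<times> letter \<times> nat) list \<Rightarrow> nat \<Rightarrow> word \<Rightarrow> nat \<Rightarrow> bool" where
  "nfa_path T p [] q \<longleftrightarrow> p = q"
| "nfa_path T p (a # w) q \<longleftrightarrow> (\<exists>r. (p, a, r) \<in> set T \<and> nfa_path T r w q)"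

definition nfa_lang :: "nfa \<Rightarrow> word set" where
  "nfa_lang A = {w. \<exists>p\<in>set (fst (snd A)). \<exists>q\<in>set (snd (snd A)). nfa_path (fst A) p w q}"

definition nfa_over :: "nat \<Rightarrow> nfa \<Rightarrow> bool" where
  "nfa_over k A \<longleftrightarrow> (\<forall>(p, a, q)\<in>set (fst A). fst a < k)"

definition enc_nfa :: "nfa \<Rightarrow> nat" where
  "enc_nfa A = prod_encode
     (enc_list (map (\<lambda>(p, a, q). prod_encode (p, prod_encode (enc_letter a, q))) (fst A)),
      prod_encode (enc_list (fst (snd A)), enc_list (snd (snd A))))"

definition piG :: "('a, 'b) monoid_scheme \<Rightarrow> 'a list \<Rightarrow> word \<Rightarrow> 'a" where
  "piG G gens w = foldr (\<lambda>l acc. (if snd l then inv\<^bsub>G\<^esub> (gens ! fst l) else gens ! fst l) \<otimes>\<^bsub>G\<^esub> acc)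
      w \<one>\<^bsub>G\<^esub>"

text \<open>The free product G * F with F free on {x,y,z}: presented on generators
  0..k-1 (those of G, k = length gens) and x = k, y = k+1, z = k+2, with relators
  all relators of G. fp_eq is the congruence on words defining equality in G * F.\<close>
inductive fp_eq :: "('a, 'b) monoid_scheme \<Rightarrow> 'a list \<Rightarrow> word \<Rightarrow> word \<Rightarrow> bool"
  for G gens where
  fp_refl: "fp_eq G gens u u"
| fp_sym: "fp_eq G gens u v \<Longrightarrow> fp_eq G gens v u"
| fp_trans: "fp_eq G gens u v \<Longrightarrow> fp_eq G gens v w \<Longrightarrow> fp_eq G gens u w"
| fp_cancel: "fp_eq G gens (u @ [(a, b), (a, \<not> b)] @ v) (u @ v)"
| fp_rel: "word_over (length gens) r \<Longrightarrow> piG G gens r = \<one>\<^bsub>G\<^esub>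
     \<Longrightarrow> fp_eq G gens (u @ r @ v) (u @ v)"

definition fp_mon_mem :: "('a, 'b) monoid_scheme \<Rightarrow> 'a list \<Rightarrow> word list \<Rightarrow> word \<Rightarrow> bool" where
  "fp_mon_mem G gens X g \<longleftrightarrow> (\<exists>ws. set ws \<subseteq> set X \<and> fp_eq G gens (concat ws) g)"

definition fp_sgp_mem :: "('a, 'b) monoid_scheme \<Rightarrow> 'a list \<Rightarrow> word list \<Rightarrow> word \<Rightarrow> bool" where
  "fp_sgp_mem G gens X g \<longleftrightarrow> (\<exists>ws. ws \<noteq> [] \<and> set ws \<subseteq> set X \<and> fp_eq G gens (concat ws) g)"

definition word_xyinv :: "nat \<Rightarrow> word" where
  "word_xyinv k = [(k, False), (Suc k, True)]"

definition fp_sgp_disjoint :: "('a, 'b) monoid_scheme \<Rightarrow> 'a list \<Rightarrow> word list \<Rightarrow> bool" where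
  "fp_sgp_disjoint G gens D \<longleftrightarrow>
     \<not> (\<exists>g. fp_sgp_mem G gens [word_xyinv (length gens)] g \<and> fp_sgp_mem G gens D g)"

definition FT_submonoid_xyinv_decidable :: "('a, 'b) monoid_scheme \<Rightarrow> 'a list \<Rightarrow> bool" where
  "FT_submonoid_xyinv_decidable G gens \<longleftrightarrow>
     decidable enc_words {X. \<forall>w\<in>set X. word_over (length gens + 3) w}
       (\<lambda>X. fp_mon_mem G gens X (word_xyinv (length gens)))"

definition sgp_disjoint_decidable :: "('a, 'b) monoid_scheme \<Rightarrow> 'a list \<Rightarrow> bool" where
  "sgp_disjoint_decidable G gens \<longleftrightarrow>
     decidable enc_words {D. \<forall>w\<in>set D. word_over (length gens + 3) w}
       (fp_sgp_disjoint G gens)"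

definition rational_membership_decidable :: "('a, 'b) monoid_scheme \<Rightarrow> 'a list \<Rightarrow> bool" where
  "rational_membership_decidable G gens \<longleftrightarrow>
     decidable (\<lambda>(A, w). prod_encode (enc_nfa A, enc_word w))
       {(A, w). nfa_over (length gens) A \<and> word_over (length gens) w}
       (\<lambda>(A, w). piG G gens w \<in> piG G gens ` nfa_lang A)"

end

theory Submission
  imports Defs
begin


definition cfun :: "nat \<Rightarrow> (nat list \<Rightarrow> nat) \<Rightarrow> bool" where
  "cfun n F \<longleftrightarrow> (\<exists>r. \<forall>xs. length xs = n \<longrightarrow> eval r xs (F xs))"

lemma cfun_cong: "cfun n F \<Longrightarrow> (\<And>xs. length xs = n \<Longrightarrow> F xs = G xs) \<Longrightarrow> cfun n G"
  unfolding cfun_def by metis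

lemma cfun_cong2: "cfun m F \<Longrightarrow> m = n \<Longrightarrow> (\<And>xs. length xs = n \<Longrightarrow> F xs = G xs) \<Longrightarrow> cfun n G"
  unfolding cfun_def by metis

lemma cfun_zero: "cfun n (\<lambda>_. 0)"
  unfolding cfun_def by (auto intro: eval_Zero)

lemma cfun_proj: "i < n \<Longrightarrow> cfun n (\<lambda>xs. xs ! i)"
  unfolding cfun_def by (auto intro!: exI[of _ "Proj i"] eval_Proj)

lemma cfun_succ1: "cfun 1 (\<lambda>xs. Suc (hd xs))"
  unfolding cfun_def apply (rule exI[of _ Succ]) apply clarify
  subgoal for xs by (cases xs) (auto intro: eval_Succ)
  done

lemma cfun_list: "\<forall>G\<in>set Gs. cfun n G \<Longrightarrow> \<exists>rs. \<forall>xs. length xs = n \<longrightarrow> list_all2 (\<lambda>g y. eval g xs y) rs (map (\<lambda>G. G xs) Gs)"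
proof (induction Gs)
  case Nil then show ?case by auto
next
  case (Cons G Gs)
  then obtain rs where rs: "\<forall>xs. length xs = n \<longrightarrow> list_all2 (\<lambda>g y. eval g xs y) rs (map (\<lambda>G. G xs) Gs)" by auto
  from Cons.prems obtain r where r: "\<forall>xs. length xs = n \<longrightarrow> eval r xs (G xs)" by (auto simp: cfun_def)
  show ?case using rs r by (intro exI[of _ "r # rs"]) auto
qed

lemma cfun_comp: assumes "cfun m F" "length Gs = m" "\<forall>G\<in>set Gs. cfun n G"
  shows "cfun n (\<lambda>xs. F (map (\<lambda>G. G xs) Gs))"
proof -
  obtain f where f: "\<forall>ys. length ys = m \<longrightarrow> eval f ys (F ys)" using assms(1) by (auto simp: cfun_def)
  obtain rs where rs: "\<forall>xs. length xs = n \<longrightarrow> list_all2 (\<lambda>g y. eval g xs y) rs (map (\<lambda>G. G xs) Gs)"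
    using cfun_list[OF assms(3)] by auto
  show ?thesis unfolding cfun_def
    apply (rule exI[of _ "Comp f rs"]) using f rs assms(2) by (auto intro: eval_Comp)
qed

fun primf :: "(nat list \<Rightarrow> nat) \<Rightarrow> (nat list \<Rightarrow> nat) \<Rightarrow> nat \<Rightarrow> nat list \<Rightarrow> nat" where
  "primf F G 0 ys = F ys"
| "primf F G (Suc k) ys = G (k # primf F G k ys # ys)"

lemma cfun_prim: assumes "cfun n F" "cfun (Suc (Suc n)) G"
  shows "cfun (Suc n) (\<lambda>xs. primf F G (hd xs) (tl xs))"
proof -
  obtain f where f: "\<forall>ys. length ys = n \<longrightarrow> eval f ys (F ys)" using assms(1) by (auto simp: cfun_def)
  obtain g where g: "\<forall>ys. length ys = Suc (Suc n) \<longrightarrow> eval g ys (G ys)" using assms(2) by (auto simp: cfun_def)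
  have *: "\<forall>ys. length ys = n \<longrightarrow> eval (Prim f g) (k # ys) (primf F G k ys)" for k
  proof (induction k)
    case 0 then show ?case using f by (auto intro: eval_Prim0)
  next
    case (Suc k) show ?case
    proof (intro allI impI)
      fix ys :: "nat list" assume l: "length ys = n"
      show "eval (Prim f g) (Suc k # ys) (primf F G (Suc k) ys)"
        using eval_PrimS[OF Suc[rule_format, OF l]] g l by auto
    qed
  qed
  show ?thesis unfolding cfun_def
    apply (intro exI[of _ "Prim f g"]) apply clarify
    subgoal for xs using * by (cases xs) auto
    done
qed

lemma cfun_c1: "cfun 1 F \<Longrightarrow> cfun n g \<Longrightarrow> cfun n (\<lambda>xs. F [g xs])"
  using cfun_comp[of 1 F "[g]" n] by auto

lemma cfun_c2: "cfun 2 F \<Longrightarrow> cfun n g \<Longrightarrow> cfun n h \<Longrightarrow> cfun n (\<lambda>xs. F [g xs, h xs])"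
  using cfun_comp[of 2 F "[g, h]" n] by auto

lemma cfun_c3: "cfun 3 F \<Longrightarrow> cfun n g \<Longrightarrow> cfun n h \<Longrightarrow> cfun n j \<Longrightarrow> cfun n (\<lambda>xs. F [g xs, h xs, j xs])"
  using cfun_comp[of 3 F "[g, h, j]" n] by auto

lemma cfun_const: "cfun n (\<lambda>_. c)"
proof (induction c)
  case 0 then show ?case by (rule cfun_zero)
next
  case (Suc c)
  from cfun_c1[OF cfun_succ1 Suc] show ?case by simp
qed

lemma cfun_Suc: "cfun n g \<Longrightarrow> cfun n (\<lambda>xs. Suc (g xs))"
  using cfun_c1[OF cfun_succ1] by simp

lemma map_nth_Suc: "length ys = Suc m \<Longrightarrow> map (\<lambda>i. ys ! Suc i) [0..<m] = tl ys"
  by (rule nth_equalityI) (auto simp: nth_tl)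

lemma cfun_tl: assumes "cfun m F" shows "cfun (Suc m) (\<lambda>ys. F (tl ys))"
proof -
  have "cfun (Suc m) (\<lambda>ys. F (map (\<lambda>G. G ys) (map (\<lambda>i ys. ys ! Suc i) [0..<m])))"
    by (rule cfun_comp[OF assms]) (auto intro: cfun_proj)
  then show ?thesis by (rule cfun_cong) (simp add: comp_def map_nth_Suc)
qed


lemma map_nth_id: "length xs = n \<Longrightarrow> map (\<lambda>i. xs ! i) [0..<n] = xs"
  by (rule nth_equalityI) auto

lemma len1: "length xs = Suc 0 \<Longrightarrow> \<exists>a. xs = [a]"
  by (cases xs) auto
lemma len2: "length xs = 2 \<Longrightarrow> \<exists>a b. xs = [a, b]"
  by (cases xs; cases "tl xs") (auto simp: numeral_2_eq_2)
lemma len3: "length xs = 3 \<Longrightarrow> \<exists>a b c. xs = [a, b, c]"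
  by (cases xs; cases "tl xs"; cases "tl (tl xs)") (auto simp: numeral_3_eq_3)

lemma cfun_add2: "cfun 2 (\<lambda>xs. xs!0 + xs!1)"
proof -
  have c: "cfun (Suc 1) (\<lambda>xs. primf (\<lambda>ys. ys!0) (\<lambda>zs. Suc (zs!1)) (hd xs) (tl xs))"
    by (rule cfun_prim) (rule cfun_proj, simp, rule cfun_Suc, rule cfun_proj, simp)
  have e: "primf (\<lambda>ys. ys!0) (\<lambda>zs. Suc (zs!1)) k ys = k + ys!0" for k ys by (induction k) auto
  show ?thesis by (rule cfun_cong2[OF c]) (auto simp: e[simplified] dest!: len2)
qed

lemma cfun_add: "cfun n g \<Longrightarrow> cfun n h \<Longrightarrow> cfun n (\<lambda>xs. g xs + h xs)"
  using cfun_c2[OF cfun_add2] by simp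

lemma cfun_pred1: "cfun 1 (\<lambda>xs. xs!0 - 1)"
proof -
  have c: "cfun (Suc 0) (\<lambda>xs. primf (\<lambda>ys. 0) (\<lambda>zs. zs!0) (hd xs) (tl xs))"
    by (rule cfun_prim) (rule cfun_zero, rule cfun_proj, simp)
  have e: "primf (\<lambda>ys. 0) (\<lambda>zs. zs!0) k ys = k - 1" for k ys by (induction k) auto
  show ?thesis by (rule cfun_cong2[OF c]) (auto simp: e[simplified] dest!: len1)
qed

lemma cfun_pred: "cfun n g \<Longrightarrow> cfun n (\<lambda>xs. g xs - 1)"
  using cfun_c1[OF cfun_pred1] by simp

lemma cfun_sub2: "cfun 2 (\<lambda>xs. xs!1 - xs!0)"
proof -
  have c: "cfun (Suc 1) (\<lambda>xs. primf (\<lambda>ys. ys!0) (\<lambda>zs. zs!1 - 1) (hd xs) (tl xs))"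
    by (rule cfun_prim) (rule cfun_proj, simp, rule cfun_pred, rule cfun_proj, simp)
  have e: "primf (\<lambda>ys. ys!0) (\<lambda>zs. zs!1 - 1) k ys = ys!0 - k" for k ys by (induction k) auto
  show ?thesis by (rule cfun_cong2[OF c]) (auto simp: e[simplified] dest!: len2)
qed

lemma cfun_sub: "cfun n g \<Longrightarrow> cfun n h \<Longrightarrow> cfun n (\<lambda>xs. g xs - h xs)"
  using cfun_c2[OF cfun_sub2, of n h g] by simp

lemma cfun_mult2: "cfun 2 (\<lambda>xs. xs!0 * xs!1)"
proof -
  have c: "cfun (Suc 1) (\<lambda>xs. primf (\<lambda>ys. 0) (\<lambda>zs. zs!1 + zs!2) (hd xs) (tl xs))"
    by (rule cfun_prim) (rule cfun_zero, rule cfun_add, rule cfun_proj, simp, rule cfun_proj, simp)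
  have e: "primf (\<lambda>ys. 0) (\<lambda>zs. zs!1 + zs!2) k ys = k * ys!0" for k ys by (induction k) auto
  show ?thesis by (rule cfun_cong2[OF c]) (auto simp: e[simplified] dest!: len2)
qed

lemma cfun_mult: "cfun n g \<Longrightarrow> cfun n h \<Longrightarrow> cfun n (\<lambda>xs. g xs * h xs)"
  using cfun_c2[OF cfun_mult2] by simp

lemma cfun_ifz3: "cfun 3 (\<lambda>xs. if xs!0 = 0 then xs!1 else xs!2)"
proof -
  have c: "cfun (Suc 2) (\<lambda>xs. primf (\<lambda>ys. ys!0) (\<lambda>zs. zs!3) (hd xs) (tl xs))"
    by (rule cfun_prim) (rule cfun_proj, simp, rule cfun_proj, simp)
  have e: "primf (\<lambda>ys. ys!0) (\<lambda>zs. zs!3) k ys = (if k = 0 then ys!0 else ys!1)" for k ys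
    by (cases k) auto
  show ?thesis by (rule cfun_cong2[OF c]) (auto simp: e[simplified] dest!: len3)
qed

lemma cfun_if: assumes "cfun n c" "cfun n g" "cfun n h" shows "cfun n (\<lambda>xs. if c xs = 0 then g xs else h xs)"
  using cfun_c3[OF cfun_ifz3 assms] by (rule cfun_cong) simp

lemma cfun_if_le: "cfun n a \<Longrightarrow> cfun n b \<Longrightarrow> cfun n g \<Longrightarrow> cfun n h \<Longrightarrow> cfun n (\<lambda>xs. if a xs \<le> b xs then g xs else h xs)"
  using cfun_if[OF cfun_sub, of n a b g h] by simp

lemma cfun_if_eq: "cfun n a \<Longrightarrow> cfun n b \<Longrightarrow> cfun n g \<Longrightarrow> cfun n h \<Longrightarrow> cfun n (\<lambda>xs. if a xs = b xs then g xs else h xs)"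
proof -
  assume a: "cfun n a" "cfun n b" "cfun n g" "cfun n h"
  have "cfun n (\<lambda>xs. if (a xs - b xs) + (b xs - a xs) = 0 then g xs else h xs)"
    by (intro cfun_if cfun_add cfun_sub a)
  then show ?thesis by (rule cfun_cong) auto
qed

lemma cfun_tri1: "cfun 1 (\<lambda>xs. triangle (xs!0))"
proof -
  have c: "cfun (Suc 0) (\<lambda>xs. primf (\<lambda>ys. 0) (\<lambda>zs. zs!1 + Suc (zs!0)) (hd xs) (tl xs))"
    by (rule cfun_prim) (rule cfun_zero, rule cfun_add, rule cfun_proj, simp, rule cfun_Suc, rule cfun_proj, simp)
  have e: "primf (\<lambda>ys. 0) (\<lambda>zs. zs!1 + Suc (zs!0)) k ys = triangle k" for k ys
    by (induction k) auto
  show ?thesis by (rule cfun_cong2[OF c]) (auto simp: e[simplified] dest!: len1)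
qed

lemma cfun_tri: "cfun n g \<Longrightarrow> cfun n (\<lambda>xs. triangle (g xs))"
  using cfun_c1[OF cfun_tri1] by simp

lemma cfun_pe: "cfun n g \<Longrightarrow> cfun n h \<Longrightarrow> cfun n (\<lambda>xs. prod_encode (g xs, h xs))"
proof -
  assume "cfun n g" "cfun n h"
  then have "cfun n (\<lambda>xs. triangle (g xs + h xs) + g xs)" by (intro cfun_add cfun_tri)
  then show ?thesis by (rule cfun_cong) (simp add: prod_encode_def)
qed


lemma triangle_mono: "m \<le> m' \<Longrightarrow> triangle m \<le> triangle m'"
  unfolding triangle_def by (intro div_le_mono mult_le_mono) auto

lemma le_triangle: "m \<le> triangle m"
  by (induction m) auto

lemma pd_bounds: "triangle (fst (prod_decode n) + snd (prod_decode n)) \<le> n"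
  "n < triangle (Suc (fst (prod_decode n) + snd (prod_decode n)))"
proof -
  obtain a b where ab: "prod_decode n = (a, b)" by (cases "prod_decode n")
  have "n = prod_encode (a, b)" using prod_decode_inverse[of n] ab by simp
  then show "triangle (fst (prod_decode n) + snd (prod_decode n)) \<le> n"
    "n < triangle (Suc (fst (prod_decode n) + snd (prod_decode n)))"
    using ab by (auto simp: prod_encode_def)
qed

definition sdiag :: "nat \<Rightarrow> nat" where "sdiag n = fst (prod_decode n) + snd (prod_decode n)"

lemma sdiag_prim: "primf (\<lambda>ys. 0) (\<lambda>zs. if triangle (Suc (zs!1)) \<le> zs!2 then Suc (zs!1) else zs!1) k [n] = min k (sdiag n)"
proof (induction k)
  case 0 then show ?case by simp
next
  case (Suc k)
  have b1: "triangle (sdiag n) \<le> n" "n < triangle (Suc (sdiag n))" using pd_bounds[of n] by (auto simp: sdiag_def)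
  show ?case
  proof (cases "k < sdiag n")
    case True
    then have "triangle (Suc k) \<le> n" using triangle_mono[of "Suc k" "sdiag n"] b1 by auto
    then show ?thesis using Suc True by auto
  next
    case False
    then show ?thesis using Suc b1 by auto
  qed
qed

lemma sdiag_le: "sdiag n \<le> n"
  using le_triangle[of "sdiag n"] pd_bounds(1)[of n] by (auto simp: sdiag_def)

lemma cfun_sdiag: "cfun n g \<Longrightarrow> cfun n (\<lambda>xs. sdiag (g xs))"
proof -
  have c: "cfun (Suc 1) (\<lambda>xs. primf (\<lambda>ys. 0) (\<lambda>zs. if triangle (Suc (zs!1)) \<le> zs!2 then Suc (zs!1) else zs!1) (hd xs) (tl xs))"
    by (rule cfun_prim) (rule cfun_zero, rule cfun_if_le, rule cfun_tri, rule cfun_Suc, rule cfun_proj, simp, rule cfun_proj, simp,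
      rule cfun_Suc, rule cfun_proj, simp, rule cfun_proj, simp)
  have c2: "cfun 2 (\<lambda>xs. min (xs!0) (sdiag (xs!1)))"
    by (rule cfun_cong2[OF c]) (auto simp: sdiag_prim[simplified] dest!: len2)
  assume g: "cfun n g"
  have "cfun n (\<lambda>xs. min (g xs) (sdiag (g xs)))" using cfun_c2[OF c2 g g] by simp
  then show ?thesis by (rule cfun_cong) (simp add: min_absorb2[OF sdiag_le])
qed

lemma pd_fst: "fst (prod_decode n) = n - triangle (sdiag n)"
proof -
  obtain a b where ab: "prod_decode n = (a, b)" by (cases "prod_decode n")
  have "n = prod_encode (a, b)" using prod_decode_inverse[of n] ab by simp
  then show ?thesis using ab by (simp add: sdiag_def prod_encode_def)
qed

lemma pd_snd: "snd (prod_decode n) = sdiag n - fst (prod_decode n)"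
  by (simp add: sdiag_def)

lemma cfun_pd1: "cfun n g \<Longrightarrow> cfun n (\<lambda>xs. fst (prod_decode (g xs)))"
  unfolding pd_fst by (intro cfun_sub cfun_tri cfun_sdiag)

lemma cfun_pd2: "cfun n g \<Longrightarrow> cfun n (\<lambda>xs. snd (prod_decode (g xs)))"
  unfolding pd_snd by (intro cfun_sub cfun_pd1 cfun_sdiag)

lemma cfun_comp_arg: assumes "cfun (Suc n) P" "cfun n K"
  shows "cfun n (\<lambda>xs. P (K xs # xs))"
proof -
  have "cfun n (\<lambda>xs. P (map (\<lambda>G. G xs) (K # map (\<lambda>i xs. xs ! i) [0..<n])))"
    by (rule cfun_comp[OF assms(1)]) (auto intro: assms(2) cfun_proj)
  then show ?thesis by (rule cfun_cong) (simp add: comp_def map_nth_id)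
qed

lemma cfun_iter: assumes "cfun (Suc n) S" "cfun n K" "cfun n A"
  shows "cfun n (\<lambda>xs. ((\<lambda>a. S (a # xs)) ^^ K xs) (A xs))"
proof -
  have G: "cfun (Suc (Suc n)) (\<lambda>zs. S (tl zs))" by (rule cfun_tl[OF assms(1)])
  have P: "cfun (Suc n) (\<lambda>ys. primf A (\<lambda>zs. S (tl zs)) (hd ys) (tl ys))"
    by (rule cfun_prim[OF assms(3) G])
  have e: "primf A (\<lambda>zs. S (tl zs)) j xs = ((\<lambda>a. S (a # xs)) ^^ j) (A xs)" for j xs
    by (induction j) auto
  show ?thesis using cfun_comp_arg[OF P assms(2)] by (simp add: e)
qed

section \<open>list codes\<close>

lemma snd_pd_le: "snd (prod_decode n) \<le> n"
  by (metis le_prod_encode_1 le_prod_encode_2 prod.collapse prod_decode_inverse)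

lemma fst_pd_le: "fst (prod_decode n) \<le> n"
  by (metis le_prod_encode_1 le_prod_encode_2 prod.collapse prod_decode_inverse)

function dec :: "nat \<Rightarrow> nat list" where
  "dec 0 = []"
| "dec (Suc n) = fst (prod_decode n) # dec (snd (prod_decode n))"
  by pat_completeness auto
termination by (relation "measure id") (auto simp: le_imp_less_Suc snd_pd_le)

lemma enc_dec[simp]: "enc_list (dec c) = c"
  by (induction c rule: dec.induct) auto

lemma dec_enc[simp]: "dec (enc_list xs) = xs"
  by (induction xs) auto

lemma length_dec: "length (dec c) \<le> c"
proof (induction c rule: dec.induct)
  case 1 then show ?case by simp
next
  case (2 n) then show ?case using snd_pd_le[of n] by simp
qed

definition fstep :: "(nat list \<Rightarrow> nat) \<Rightarrow> nat list \<Rightarrow> nat" where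
  "fstep F ys = (if fst (prod_decode (ys!0)) = 0 then ys!0 else
     prod_encode (snd (prod_decode (fst (prod_decode (ys!0)) - 1)),
       F (snd (prod_decode (ys!0)) # fst (prod_decode (fst (prod_decode (ys!0)) - 1)) # tl ys)))"

lemma cfun_comp_cons2: assumes "cfun (Suc (Suc n)) F" "cfun (Suc n) a" "cfun (Suc n) b"
  shows "cfun (Suc n) (\<lambda>ys. F (a ys # b ys # tl ys))"
proof -
  have "cfun (Suc n) (\<lambda>ys. F (map (\<lambda>G. G ys) (a # b # map (\<lambda>i ys. ys ! Suc i) [0..<n])))"
    by (rule cfun_comp[OF assms(1)]) (auto intro: assms cfun_proj)
  then show ?thesis by (rule cfun_cong) (simp add: comp_def map_nth_Suc)
qed

lemma cfun_fstep: assumes "cfun (Suc (Suc n)) F" shows "cfun (Suc n) (fstep F)"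
  unfolding fstep_def
  by (intro cfun_if cfun_pd1 cfun_pd2 cfun_proj cfun_pe cfun_pred cfun_comp_cons2[OF assms]) auto

lemma fstep_iter: "length (dec c) \<le> j \<Longrightarrow>
  ((\<lambda>st. fstep F (st # xs)) ^^ j) (prod_encode (c, a)) = prod_encode (0, foldl (\<lambda>a x. F (a # x # xs)) a (dec c))"
proof (induction j arbitrary: c a)
  case 0 then show ?case by (cases c) auto
next
  case (Suc j)
  note IH = Suc.IH and pr = Suc.prems
  have split: "((\<lambda>st. fstep F (st # xs)) ^^ Suc j) (prod_encode (c, a)) = ((\<lambda>st. fstep F (st # xs)) ^^ j) (fstep F (prod_encode (c, a) # xs))"
    by (simp only: funpow_Suc_right comp_apply)
  show ?case
  proof (cases c)
    case 0
    have fx: "fstep F (prod_encode (c, a) # xs) = prod_encode (0, a)" using 0 by (simp add: fstep_def)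
    show ?thesis unfolding split fx using IH[of 0 a] 0 by simp
  next
    case (Suc m)
    have fx: "fstep F (prod_encode (c, a) # xs) = prod_encode (snd (prod_decode m), F (a # fst (prod_decode m) # xs))"
      using Suc by (simp add: fstep_def)
    show ?thesis unfolding split fx using IH[of "snd (prod_decode m)"] pr Suc by simp
  qed
qed

lemma cfun_fold: assumes "cfun (Suc (Suc n)) F" "cfun n C" "cfun n A"
  shows "cfun n (\<lambda>xs. foldl (\<lambda>a x. F (a # x # xs)) (A xs) (dec (C xs)))"
proof -
  have "cfun n (\<lambda>xs. snd (prod_decode (((\<lambda>st. fstep F (st # xs)) ^^ C xs) (prod_encode (C xs, A xs)))))"
    by (intro cfun_pd2 cfun_iter cfun_fstep assms cfun_pe)
  then show ?thesis by (rule cfun_cong) (simp add: fstep_iter length_dec)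
qed


definition clist :: "nat \<Rightarrow> (nat list \<Rightarrow> nat list) \<Rightarrow> bool" where
  "clist n L \<longleftrightarrow> cfun n (\<lambda>xs. enc_list (L xs))"

lemma clist_dec: "cfun n C \<Longrightarrow> clist n (\<lambda>xs. dec (C xs))"
  by (simp add: clist_def)

lemma clist_cfun: "clist n L \<Longrightarrow> cfun n (\<lambda>xs. enc_list (L xs))"
  by (simp add: clist_def)

lemma clist_cong: assumes "clist n L" "\<And>xs. length xs = n \<Longrightarrow> L xs = M xs" shows "clist n M"
  using assms(1) unfolding clist_def by (rule cfun_cong) (simp add: assms(2))

lemma clist_nil: "clist n (\<lambda>_. [])"
  unfolding clist_def by (simp add: cfun_zero)

lemma clist_cons: "cfun n h \<Longrightarrow> clist n L \<Longrightarrow> clist n (\<lambda>xs. h xs # L xs)"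
  unfolding clist_def by (simp add: cfun_Suc cfun_pe)

lemma foldl_cons_code: "foldl (\<lambda>a x. Suc (prod_encode (x, a))) (enc_list ys) l = enc_list (rev l @ ys)"
  apply (induction l arbitrary: ys)
   apply simp
  subgoal for a l ys by (drule meta_spec[of _ "a # ys"]) simp
  done

lemma clist_rev: assumes "clist n L" shows "clist n (\<lambda>xs. rev (L xs))"
proof -
  have F: "cfun (Suc (Suc n)) (\<lambda>zs. Suc (prod_encode (zs!1, zs!0)))"
    by (intro cfun_Suc cfun_pe cfun_proj) auto
  have "cfun n (\<lambda>xs. foldl (\<lambda>a x. (\<lambda>zs. Suc (prod_encode (zs!1, zs!0))) (a # x # xs)) ((\<lambda>_. 0) xs) (dec (enc_list (L xs))))"
    by (rule cfun_fold[OF F clist_cfun[OF assms] cfun_zero])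
  then show ?thesis unfolding clist_def
    by (rule cfun_cong) (simp add: foldl_cons_code[of "[]", simplified])
qed

lemma clist_app: assumes "clist n L1" "clist n L2" shows "clist n (\<lambda>xs. L1 xs @ L2 xs)"
proof -
  have F: "cfun (Suc (Suc n)) (\<lambda>zs. Suc (prod_encode (zs!1, zs!0)))"
    by (intro cfun_Suc cfun_pe cfun_proj) auto
  have "cfun n (\<lambda>xs. foldl (\<lambda>a x. (\<lambda>zs. Suc (prod_encode (zs!1, zs!0))) (a # x # xs)) (enc_list (L2 xs)) (dec (enc_list (rev (L1 xs)))))"
    by (rule cfun_fold[OF F clist_cfun[OF clist_rev[OF assms(1)]] clist_cfun[OF assms(2)]])
  then show ?thesis unfolding clist_def
    by (rule cfun_cong) (simp add: foldl_cons_code)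
qed

lemma clist_map: assumes "cfun (Suc n) g" "clist n L" shows "clist n (\<lambda>xs. map (\<lambda>x. g (x # xs)) (L xs))"
proof -
  have F: "cfun (Suc (Suc n)) (\<lambda>zs. Suc (prod_encode (g (tl zs), zs!0)))"
    by (intro cfun_Suc cfun_pe cfun_proj cfun_tl assms(1)) auto
  have "cfun n (\<lambda>xs. foldl (\<lambda>a x. (\<lambda>zs. Suc (prod_encode (g (tl zs), zs!0))) (a # x # xs)) ((\<lambda>_. 0) xs) (dec (enc_list (L xs))))"
    by (rule cfun_fold[OF F clist_cfun[OF assms(2)] cfun_zero])
  then have "clist n (\<lambda>xs. rev (map (\<lambda>x. g (x # xs)) (L xs)))" unfolding clist_def
  proof (rule cfun_cong)
    fix xs
    have "foldl (\<lambda>a x. Suc (prod_encode (g (x # xs), a))) (enc_list ys) l = enc_list (rev (map (\<lambda>x. g (x # xs)) l) @ ys)" for ys l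
      apply (induction l arbitrary: ys)
       apply simp
      subgoal for a l ys by (drule meta_spec[of _ "g (a # xs) # ys"]) simp
      done
    from this[of "[]"] show "foldl (\<lambda>a x. (\<lambda>zs. Suc (prod_encode (g (tl zs), zs!0))) (a # x # xs)) ((\<lambda>_. 0) xs) (dec (enc_list (L xs))) =
      enc_list (rev (map (\<lambda>x. g (x # xs)) (L xs)))" by simp
  qed
  from clist_rev[OF this] show ?thesis by simp
qed

lemma clist_rep: assumes "cfun n N" "cfun n h" shows "clist n (\<lambda>xs. replicate (N xs) (h xs))"
proof -
  have S: "cfun (Suc n) (\<lambda>ys. Suc (prod_encode (h (tl ys), ys!0)))"
    by (intro cfun_Suc cfun_pe cfun_proj cfun_tl assms(2)) auto
  have "cfun n (\<lambda>xs. ((\<lambda>a. (\<lambda>ys. Suc (prod_encode (h (tl ys), ys!0))) (a # xs)) ^^ N xs) ((\<lambda>_. 0) xs))"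
    by (rule cfun_iter[OF S assms(1) cfun_zero])
  then show ?thesis unfolding clist_def
  proof (rule cfun_cong)
    fix xs
    have "((\<lambda>a. Suc (prod_encode (h xs, a))) ^^ m) 0 = enc_list (replicate m (h xs))" for m
      by (induction m) auto
    then show "((\<lambda>a. (\<lambda>ys. Suc (prod_encode (h (tl ys), ys!0))) (a # xs)) ^^ N xs) ((\<lambda>_. 0) xs) = enc_list (replicate (N xs) (h xs))"
      by simp
  qed
qed




type_synonym plet = "int \<times> bool"

definition flip :: "plet \<Rightarrow> plet" where "flip l = (fst l, \<not> snd l)"

definition pmul :: "plet list \<Rightarrow> plet \<Rightarrow> plet list" where
  "pmul pos l = (if pos \<noteq> [] \<and> last pos = flip l then butlast pos else pos @ [l])"

definition reduced :: "plet list \<Rightarrow> bool" where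
  "reduced = successively (\<lambda>a b. b \<noteq> flip a)"

lemma flip_flip[simp]: "flip (flip l) = l" by (simp add: flip_def)

lemma reduced_snoc: "reduced (xs @ [l]) \<longleftrightarrow> reduced xs \<and> (xs = [] \<or> l \<noteq> flip (last xs))"
  unfolding reduced_def by (auto simp: successively_append_iff)

lemma reduced_butlast: "reduced xs \<Longrightarrow> reduced (butlast xs)"
  by (cases xs rule: rev_cases) (auto simp: reduced_snoc)

lemma mult_reduced: "reduced pos \<Longrightarrow> reduced (pmul pos l)"
  unfolding pmul_def by (auto simp: reduced_snoc reduced_butlast flip_def)

lemma mult_flip: assumes "reduced pos" shows "pmul (pmul pos l) (flip l) = pos"
proof (cases "pos \<noteq> [] \<and> last pos = flip l")
  case True
  then obtain ys where ys: "pos = ys @ [flip l]" by (metis append_butlast_last_id)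
  then have "ys = [] \<or> last ys \<noteq> l" using assms by (auto simp: reduced_snoc)
  then show ?thesis using ys by (auto simp: pmul_def)
next
  case False then show ?thesis by (auto simp: pmul_def)
qed

definition gl :: "('a, 'b) monoid_scheme \<Rightarrow> 'a list \<Rightarrow> letter \<Rightarrow> 'a" where
  "gl G gens l = (if snd l then inv\<^bsub>G\<^esub> (gens ! fst l) else gens ! fst l)"

type_synonym 'a st = "plet list \<times> int \<times> (plet list \<Rightarrow> 'a)"

fun step :: "('a, 'b) monoid_scheme \<Rightarrow> 'a list \<Rightarrow> letter \<Rightarrow> 'a st \<Rightarrow> 'a st" where
  "step G gens (i, b) (pos, c, L) =
    (if i < length gens then (pos, c, L(pos := L pos \<otimes>\<^bsub>G\<^esub> gl G gens (i, b)))
     else if i = length gens then (pmul pos (c, b), c, L)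
     else if i = Suc (length gens) then (pmul pos (c - 1, b), c, L)
     else if i = Suc (Suc (length gens)) then (pos, if b then c - 1 else c + 1, L)
     else (pos, c, L))"

definition act :: "('a, 'b) monoid_scheme \<Rightarrow> 'a list \<Rightarrow> word \<Rightarrow> 'a st \<Rightarrow> 'a st" where
  "act G gens w s = fold (step G gens) w s"

definition valid :: "('a, 'b) monoid_scheme \<Rightarrow> 'a st \<Rightarrow> bool" where
  "valid G s \<longleftrightarrow> reduced (fst s) \<and> (\<forall>p. snd (snd s) p \<in> carrier G)"

lemma act_Nil[simp]: "act G gens [] s = s" by (simp add: act_def)
lemma act_Cons[simp]: "act G gens (l # w) s = act G gens w (step G gens l s)" by (simp add: act_def)
lemma act_append[simp]: "act G gens (u @ v) s = act G gens v (act G gens u s)" by (simp add: act_def)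

context
  fixes G :: "('a, 'b) monoid_scheme" and gens :: "'a list"
  assumes grp: "group G" and gens: "set gens \<subseteq> carrier G"
begin

lemma gl_closed: assumes "fst l < length gens" shows "gl G gens l \<in> carrier G"
proof -
  have "gens ! fst l \<in> carrier G" using assms gens nth_mem by blast
  then show ?thesis by (auto simp: gl_def intro: group.inv_closed[OF grp])
qed

lemma step_valid: "valid G s \<Longrightarrow> valid G (step G gens l s)"
  apply (cases l; cases s)
  apply (auto simp: valid_def mult_reduced intro!: monoid.m_closed[OF group.is_monoid[OF grp]] gl_closed)
  done

lemma act_valid: "valid G s \<Longrightarrow> valid G (act G gens w s)"
  by (induction w arbitrary: s) (auto simp: step_valid)

lemma step_cancel: assumes "valid G s" shows "step G gens (a, \<not> b) (step G gens (a, b) s) = s"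
proof -
  obtain pos c L where s: "s = (pos, c, L)" by (cases s)
  have red: "reduced pos" and Lc: "\<And>p. L p \<in> carrier G" using assms s by (auto simp: valid_def)
  show ?thesis
  proof (cases "a < length gens")
    case True
    have g: "gens ! a \<in> carrier G" using gens True by auto
    have "L pos \<otimes>\<^bsub>G\<^esub> gl G gens (a, b) \<otimes>\<^bsub>G\<^esub> gl G gens (a, \<not> b) = L pos"
      using g Lc[of pos] by (cases b) (auto simp: gl_def group.inv_solve_right'[OF grp] group.r_inv group.l_inv
         monoid.m_assoc[OF group.is_monoid[OF grp]] group.inv_closed grp monoid.r_one[OF group.is_monoid[OF grp]])
    then show ?thesis using s True by auto
  next
    case False
    have m: "pmul (pmul pos (x, b)) (x, \<not> b) = pos" for x
      using mult_flip[OF red, of "(x, b)"] by (simp add: flip_def)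
    show ?thesis using s False m by auto
  qed
qed

lemma piG_Cons: "piG G gens (l # w) = gl G gens l \<otimes>\<^bsub>G\<^esub> piG G gens w"
  by (simp add: piG_def gl_def)

lemma piG_closed: "word_over (length gens) w \<Longrightarrow> piG G gens w \<in> carrier G"
  by (induction w) (auto simp: piG_Cons word_over_def piG_def[of G gens "[]"] gl_closed
       intro!: monoid.m_closed[OF group.is_monoid[OF grp]] monoid.one_closed[OF group.is_monoid[OF grp]])

lemma act_rel: "word_over (length gens) r \<Longrightarrow> (\<forall>p. L p \<in> carrier G) \<Longrightarrow>
  act G gens r (pos, c, L) = (pos, c, L(pos := L pos \<otimes>\<^bsub>G\<^esub> piG G gens r))"
proof (induction r arbitrary: L)
  case Nil then show ?case by (simp add: piG_def monoid.r_one[OF group.is_monoid[OF grp]])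
next
  case (Cons l r)
  obtain i b where l: "l = (i, b)" by (cases l)
  have i: "i < length gens" using Cons.prems l by (auto simp: word_over_def)
  have wr: "word_over (length gens) r" using Cons.prems by (auto simp: word_over_def)
  have gc: "gl G gens l \<in> carrier G" using i l gl_closed by auto
  let ?L = "L(pos := L pos \<otimes>\<^bsub>G\<^esub> gl G gens l)"
  have Lc: "\<forall>p. ?L p \<in> carrier G" using Cons.prems gc by (auto intro: monoid.m_closed[OF group.is_monoid[OF grp]])
  have "act G gens (l # r) (pos, c, L) = act G gens r (pos, c, ?L)" using l i by simp
  also have "\<dots> = (pos, c, ?L(pos := ?L pos \<otimes>\<^bsub>G\<^esub> piG G gens r))" using Cons.IH[OF wr Lc] .
  also have "\<dots> = (pos, c, L(pos := L pos \<otimes>\<^bsub>G\<^esub> piG G gens (l # r)))"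
    using Cons.prems gc piG_closed[OF wr] by (simp add: piG_Cons monoid.m_assoc[OF group.is_monoid[OF grp]])
  finally show ?case .
qed

lemma fp_eq_act: "fp_eq G gens u v \<Longrightarrow> valid G s \<Longrightarrow> act G gens u s = act G gens v s"
proof (induction arbitrary: s rule: fp_eq.induct)
  case (fp_refl u) then show ?case by simp
next
  case (fp_sym u v) then show ?case by simp
next
  case (fp_trans u v w) then show ?case by simp
next
  case (fp_cancel u a b v)
  have "valid G (act G gens u s)" by (rule act_valid[OF fp_cancel])
  then show ?case using step_cancel by simp
next
  case (fp_rel r u v)
  have vs: "valid G (act G gens u s)" by (rule act_valid[OF fp_rel(3)])
  obtain pos c L where e: "act G gens u s = (pos, c, L)" by (cases "act G gens u s")
  have Lc: "\<forall>p. L p \<in> carrier G" using vs e by (auto simp: valid_def)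
  have "act G gens r (pos, c, L) = (pos, c, L)"
    using act_rel[OF fp_rel(1) Lc] fp_rel(2) Lc by (simp add: monoid.r_one[OF group.is_monoid[OF grp]])
  then show ?case using e by simp
qed

end


section \<open>The reduction words\<close>

definition zsw :: "nat \<Rightarrow> nat \<Rightarrow> bool \<Rightarrow> word" where "zsw k n b = replicate n (Suc (Suc k), b)"
definition sw :: "nat \<Rightarrow> nat \<Rightarrow> word" where "sw k p = zsw k (Suc p) False @ [(k, False)] @ zsw k (Suc p) True"
definition invw :: "word \<Rightarrow> word" where "invw v = rev (map (\<lambda>l. (fst l, \<not> snd l)) v)"
definition initw :: "nat \<Rightarrow> nat \<Rightarrow> word" where "initw k p = (k, False) # invw (sw k p)"
fun transw :: "nat \<Rightarrow> nat \<times> letter \<times> nat \<Rightarrow> word" where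
  "transw k (p, a, q) = sw k p @ [a] @ invw (sw k q)"
definition finw :: "nat \<Rightarrow> word \<Rightarrow> nat \<Rightarrow> word" where "finw k w q = sw k q @ invw w @ [(Suc k, True)]"
definition Xw :: "nat \<Rightarrow> nfa \<Rightarrow> word \<Rightarrow> word list" where
  "Xw k A w = map (initw k) (fst (snd A)) @ map (transw k) (fst A) @ map (finw k w) (snd (snd A))"

lemma invw_sw: "invw (sw k p) = zsw k (Suc p) False @ [(k, True)] @ zsw k (Suc p) True"
  by (simp add: invw_def sw_def zsw_def replicate_app_Cons_same)

lemma invw_Cons: "invw (l # v) = invw v @ [(fst l, \<not> snd l)]" by (simp add: invw_def)
lemma invw_Nil[simp]: "invw [] = []" by (simp add: invw_def)

lemma word_over_invw: "word_over k (invw w) = word_over k w"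
  by (auto simp: word_over_def invw_def)

definition Hp :: "plet list" where "Hp = [(0, False)]"
definition Cp :: "nat \<Rightarrow> plet list" where "Cp p = [(0, False), (int p + 1, True)]"
definition Ep :: "plet list" where "Ep = [(0, False), (-1, True)]"
definition pfx :: "plet list \<Rightarrow> plet list \<Rightarrow> bool" where "pfx v x \<longleftrightarrow> (\<exists>t. x = v @ t)"

lemma pfx_stay: assumes "pfx v pos" "\<not> (pos = v \<and> v \<noteq> [] \<and> last v = flip l)" shows "pfx v (pmul pos l)"
proof -
  obtain t where t: "pos = v @ t" using assms(1) by (auto simp: pfx_def)
  show ?thesis
  proof (cases "pos \<noteq> [] \<and> last pos = flip l")
    case True
    then have pm: "pmul pos l = butlast pos" unfolding pmul_def by (rule if_P)
    have "t \<noteq> []" using True assms(2) t by auto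
    then have "butlast pos = v @ butlast t" using t by (simp add: butlast_append)
    then show ?thesis using pm by (simp add: pfx_def)
  next
    case False
    then have pm: "pmul pos l = pos @ [l]" unfolding pmul_def by (rule if_not_P)
    then show ?thesis using t by (simp add: pfx_def)
  qed
qed

lemma pfx_enter: assumes "\<not> pfx v pos" "pfx v (pmul pos l)" shows "v = pos @ [l]"
proof -
  obtain t where t: "pmul pos l = v @ t" using assms(2) by (auto simp: pfx_def)
  show ?thesis
  proof (cases "pos \<noteq> [] \<and> last pos = flip l")
    case True
    then have pm: "pmul pos l = butlast pos" unfolding pmul_def by (rule if_P)
    have "pos \<noteq> []" using True by simp
    then have "pos = butlast pos @ [last pos]" by (rule append_butlast_last_id[symmetric])
    also have "\<dots> = v @ (t @ [last pos])" using t pm by simp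
    finally have "pfx v pos" unfolding pfx_def by (rule exI)
    then show ?thesis using assms(1) by blast
  next
    case False
    then have pm: "pmul pos l = pos @ [l]" unfolding pmul_def by (rule if_not_P)
    show ?thesis
    proof (cases "t = []")
      case True then show ?thesis using t pm by simp
    next
      case False
      have tt: "t = butlast t @ [last t]" using False by simp
      have "pos @ [l] = (v @ butlast t) @ [last t]" using t pm tt by (metis append.assoc)
      then have "pos = v @ butlast t" by simp
      then have "pfx v pos" by (simp add: pfx_def)
      then show ?thesis using assms(1) by blast
    qed
  qed
qed

context
  fixes G :: "('a, 'b) monoid_scheme" and gens :: "'a list"
  assumes grp: "group G" and gens: "set gens \<subseteq> carrier G"
begin

lemma act_zsw: "act G gens (zsw (length gens) n b) (pos, c, L) = (pos, if b then c - int n else c + int n, L)"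
  by (induction n arbitrary: c) (auto simp: zsw_def)

lemma act_sw: "act G gens (sw (length gens) p) (pos, 0, L) = (pmul pos (int p + 1, False), 0, L)"
  by (simp add: sw_def act_zsw add.commute)

lemma act_isw: "act G gens (invw (sw (length gens) p)) (pos, 0, L) = (pmul pos (int p + 1, True), 0, L)"
  by (simp add: invw_sw act_zsw add.commute)

lemma act_init: "act G gens (initw (length gens) p) (pos, 0, L) = (pmul (pmul pos (0, False)) (int p + 1, True), 0, L)"
  by (simp add: initw_def act_isw)

lemma act_trans: "fst a < length gens \<Longrightarrow>
  act G gens (transw (length gens) (p, a, q)) (pos, 0, L) =
   (pmul (pmul pos (int p + 1, False)) (int q + 1, True), 0,
    L(pmul pos (int p + 1, False) := L (pmul pos (int p + 1, False)) \<otimes>\<^bsub>G\<^esub> gl G gens a))"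
  by (cases a) (simp add: act_sw act_isw)

lemma v1: assumes w': "word_over (length gens) w" and L: "\<forall>p. L p \<in> carrier G"
  shows "act G gens w (P, 0, L) = (P, 0, L(P := L P \<otimes>\<^bsub>G\<^esub> piG G gens w))"
  by (rule act_rel[OF grp gens w' L])
lemma act_fin: assumes w: "word_over (length gens) w" and L: "\<forall>p. L p \<in> carrier G"
  shows "act G gens (finw (length gens) w q) (pos, 0, L) =
   (pmul (pmul pos (int q + 1, False)) (-1, True), 0,
    L(pmul pos (int q + 1, False) := L (pmul pos (int q + 1, False)) \<otimes>\<^bsub>G\<^esub> piG G gens (invw w)))"
proof -
  have w': "word_over (length gens) (invw w)" using w by (simp add: word_over_invw)
  have a: "act G gens (finw (length gens) w q) (pos, 0, L) = act G gens [(Suc (length gens), True)] (act G gens (invw w) (act G gens (sw (length gens) q) (pos, 0, L)))"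
    unfolding finw_def act_append ..
  show ?thesis unfolding a act_sw v1[OF w' L] by simp
qed

end


lemma last_Hp[simp]: "last Hp = (0, False)" by (simp add: Hp_def)
lemma last_Cp[simp]: "last (Cp p) = (int p + 1, True)" by (simp add: Cp_def)
lemma last_Ep[simp]: "last Ep = (-1, True)" by (simp add: Ep_def)
lemma ne_Hp[simp]: "Hp \<noteq> []" "Cp p \<noteq> []" "Ep \<noteq> []" by (auto simp: Hp_def Cp_def Ep_def)
lemma flip_simp[simp]: "flip (x, b) = (x, \<not> b)" by (simp add: flip_def)

lemma pfx_refl[simp]: "pfx v v" by (simp add: pfx_def)
lemma pfx_Cp_Hp: "pfx (Cp p) x \<Longrightarrow> pfx Hp x" by (auto simp: pfx_def Cp_def Hp_def)
lemma pfx_Ep_Hp: "pfx Ep x \<Longrightarrow> pfx Hp x" by (auto simp: pfx_def Ep_def Hp_def)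
lemma pfx_Cp_Cp: "pfx (Cp p) x \<Longrightarrow> pfx (Cp p') x \<Longrightarrow> p = p'" by (auto simp: pfx_def Cp_def)
lemma pfx_Ep_Cp: "pfx Ep x \<Longrightarrow> \<not> pfx (Cp p) x" by (auto simp: pfx_def Cp_def Ep_def)
lemma pfx_Cp_neq: "pfx (Cp p) x \<Longrightarrow> x \<noteq> Hp" by (auto simp: pfx_def Cp_def Hp_def)
lemma pfx_Ep_neq: "pfx Ep x \<Longrightarrow> x \<noteq> Hp" by (auto simp: pfx_def Ep_def Hp_def)

lemma pmul_Cp: "pmul (Cp p) (int p + 1, False) = Hp" by (simp add: pmul_def Cp_def Hp_def)
lemma pmul_Hp_C: "pmul Hp (int q + 1, True) = Cp q" by (simp add: pmul_def Cp_def Hp_def)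
lemma pmul_Hp_E: "pmul Hp (-1, True) = Ep" by (simp add: pmul_def Ep_def Hp_def)
lemma pmul_nil: "pmul [] l = [l]" by (simp add: pmul_def)

lemma stay: "pfx v pos \<Longrightarrow> v \<noteq> [] \<Longrightarrow> last v \<noteq> flip l \<Longrightarrow> pfx v (pmul pos l)"
  using pfx_stay by blast

lemma noenter_H: assumes "\<not> pfx Hp pos" "l \<noteq> (0, False)" shows "\<not> pfx Hp (pmul pos l)"
proof
  assume "pfx Hp (pmul pos l)"
  then have "Hp = pos @ [l]" using pfx_enter assms(1) by blast
  then have "last Hp = last (pos @ [l])" by (rule arg_cong)
  then have "l = (0, False)" by simp
  then show False using assms(2) by simp
qed

lemma butlast_Cp: "butlast (Cp p) = Hp" by (simp add: Cp_def Hp_def)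
lemma butlast_Ep: "butlast Ep = Hp" by (simp add: Ep_def Hp_def)

lemma enter_C: assumes "\<not> pfx (Cp p) pos" "pfx (Cp p) (pmul pos l)" shows "pos = Hp \<and> l = (int p + 1, True)"
proof -
  have e: "Cp p = pos @ [l]" using pfx_enter assms by blast
  have "butlast (Cp p) = pos" "last (Cp p) = l" unfolding e by simp_all
  then show ?thesis unfolding butlast_Cp last_Cp by simp
qed

lemma enter_E: assumes "\<not> pfx Ep pos" "pfx Ep (pmul pos l)" shows "pos = Hp \<and> l = (-1, True)"
proof -
  have e: "Ep = pos @ [l]" using pfx_enter assms by blast
  have "butlast Ep = pos" "last Ep = l" unfolding e by simp_all
  then show ?thesis unfolding butlast_Ep last_Ep by simp
qed

lemma pmul_eq_H: assumes "pmul pos l = Hp" shows "(pos = [] \<and> l = (0, False)) \<or> pos = Hp @ [flip l]"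
proof (cases "pos \<noteq> [] \<and> last pos = flip l")
  case True
  have "pmul pos l = butlast pos" unfolding pmul_def by (rule if_P[OF True])
  then have b: "butlast pos = Hp" using assms by simp
  have e1: "butlast pos @ [last pos] = pos" using True append_butlast_last_id by blast
  have "Hp @ [flip l] = pos" using e1 unfolding b conjunct2[OF True] .
  then show ?thesis by blast
next
  case False
  have "pmul pos l = pos @ [l]" unfolding pmul_def by (rule if_not_P[OF False])
  then have "pos @ [l] = [(0, False)]" using assms by (simp add: Hp_def)
  then show ?thesis by (cases pos) simp_all
qed

lemma Hp_flip_Cp: "Hp @ [flip (int p + 1, False)] = Cp p" by (simp add: Hp_def Cp_def)
lemma Hp_not_red: "\<not> reduced (Hp @ [flip (0, False)])" by (simp add: Hp_def reduced_def)

lemma nfa_path_snoc: "nfa_path T p u r \<Longrightarrow> (r, a, q) \<in> set T \<Longrightarrow> nfa_path T p (u @ [a]) q"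
  by (induction u arbitrary: p) auto

definition InvO :: "('a, 'b) monoid_scheme \<Rightarrow> plet list \<Rightarrow> (plet list \<Rightarrow> 'a) \<Rightarrow> bool" where
  "InvO G pos L \<longleftrightarrow> \<not> pfx Hp pos \<and> L Hp = \<one>\<^bsub>G\<^esub>"
definition InvJ :: "plet list \<Rightarrow> bool" where
  "InvJ pos \<longleftrightarrow> pfx Hp pos \<and> (\<forall>p. \<not> pfx (Cp p) pos) \<and> \<not> pfx Ep pos"
definition InvC :: "('a, 'b) monoid_scheme \<Rightarrow> 'a list \<Rightarrow> nfa \<Rightarrow> plet list \<Rightarrow> (plet list \<Rightarrow> 'a) \<Rightarrow> bool" where
  "InvC G gens A pos L \<longleftrightarrow> (\<exists>p. pfx (Cp p) pos \<and> (\<exists>p0\<in>set (fst (snd A)). \<exists>u. nfa_path (fst A) p0 u p \<and>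
          word_over (length gens) u \<and> L Hp = piG G gens u))"
definition InvE :: "('a, 'b) monoid_scheme \<Rightarrow> 'a list \<Rightarrow> nfa \<Rightarrow> word \<Rightarrow> plet list \<Rightarrow> (plet list \<Rightarrow> 'a) \<Rightarrow> bool" where
  "InvE G gens A w pos L \<longleftrightarrow> pfx Ep pos \<and> (\<exists>p0\<in>set (fst (snd A)). \<exists>q\<in>set (snd (snd A)). \<exists>u. nfa_path (fst A) p0 u q \<and>
          word_over (length gens) u \<and> L Hp = piG G gens u \<otimes>\<^bsub>G\<^esub> piG G gens (invw w))"

definition Inv :: "('a, 'b) monoid_scheme \<Rightarrow> 'a list \<Rightarrow> nfa \<Rightarrow> word \<Rightarrow> 'a st \<Rightarrow> bool" where
  "Inv G gens A w s \<longleftrightarrow> valid G s \<and> fst (snd s) = 0 \<and>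
    (InvO G (fst s) (snd (snd s)) \<or> InvJ (fst s) \<or> InvC G gens A (fst s) (snd (snd s)) \<or> InvE G gens A w (fst s) (snd (snd s)))"

context
  fixes G :: "('a, 'b) monoid_scheme" and gens :: "'a list"
  assumes grp: "group G" and gens: "set gens \<subseteq> carrier G"
begin

lemma piG_append: "word_over (length gens) u \<Longrightarrow> word_over (length gens) v \<Longrightarrow>
  piG G gens (u @ v) = piG G gens u \<otimes>\<^bsub>G\<^esub> piG G gens v"
proof (induction u)
  case Nil then show ?case using piG_closed[OF grp gens Nil(2)]
    by (simp add: piG_def[of G gens "[]"] monoid.l_one[OF group.is_monoid[OF grp]])
next
  case (Cons l u)
  have wu: "word_over (length gens) u" and l: "fst l < length gens" using Cons.prems by (auto simp: word_over_def)
  have "piG G gens ((l # u) @ v) = gl G gens l \<otimes>\<^bsub>G\<^esub> piG G gens (u @ v)"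
    by (simp add: piG_Cons[OF grp gens])
  also have "\<dots> = gl G gens l \<otimes>\<^bsub>G\<^esub> (piG G gens u \<otimes>\<^bsub>G\<^esub> piG G gens v)"
    by (simp only: Cons.IH[OF wu Cons.prems(2)])
  also have "\<dots> = (gl G gens l \<otimes>\<^bsub>G\<^esub> piG G gens u) \<otimes>\<^bsub>G\<^esub> piG G gens v"
    by (rule monoid.m_assoc[OF group.is_monoid[OF grp], symmetric])
       (auto intro: gl_closed[OF grp gens l] piG_closed[OF grp gens wu] piG_closed[OF grp gens Cons.prems(2)])
  also have "\<dots> = piG G gens (l # u) \<otimes>\<^bsub>G\<^esub> piG G gens v"
    by (simp add: piG_Cons[OF grp gens])
  finally show ?case .
qed

lemma inv_init: assumes I: "Inv G gens A w s" and p: "p \<in> set (fst (snd A))"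
  shows "Inv G gens A w (act G gens (initw (length gens) p) s)"
proof -
  obtain pos L where s: "s = (pos, 0, L)" using I by (cases s) (auto simp: Inv_def)
  have v: "valid G s" using I by (simp add: Inv_def)
  have red: "reduced pos" using v s by (simp add: valid_def)
  define P1 where "P1 = pmul pos (0, False)"
  define P2 where "P2 = pmul P1 (int p + 1, True)"
  have e: "act G gens (initw (length gens) p) s = (P2, 0, L)" unfolding s P1_def P2_def by (rule act_init[OF grp gens])
  have v2: "valid G (P2, 0, L)" using act_valid[OF grp gens v, of "initw (length gens) p"] unfolding e .
  have cases: "InvO G pos L \<or> InvJ pos \<or> InvC G gens A pos L \<or> InvE G gens A w pos L"
    using I s by (simp add: Inv_def)
  have cO: "InvO G P2 L \<or> InvC G gens A P2 L" if O: "InvO G pos L"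
  proof (cases "pos = []")
    case True
    then have c2: "P2 = Cp p" unfolding P2_def P1_def by (simp add: pmul_nil pmul_Hp_C[unfolded Hp_def])
    have "InvC G gens A P2 L" unfolding InvC_def
    proof (intro exI conjI bexI)
      show "pfx (Cp p) P2" using c2 by simp
      show "nfa_path (fst A) p [] p" by simp
      show "word_over (length gens) []" by (simp add: word_over_def)
      show "L Hp = piG G gens []" using O by (simp add: InvO_def piG_def)
    qed (rule p)
    then show ?thesis by blast
  next
    case False
    have "\<not> pfx Hp P1" unfolding P1_def using pfx_enter[of Hp pos "(0, False)"] O False by (auto simp: Hp_def InvO_def)
    then have "\<not> pfx Hp P2" unfolding P2_def by (rule noenter_H) simp
    then show ?thesis using O by (simp add: InvO_def)
  qed
  have cJ: "InvJ P2" if J0: "InvJ pos"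
  proof -
    have J: "pfx Hp pos" "\<forall>p. \<not> pfx (Cp p) pos" "\<not> pfx Ep pos" using J0 by (auto simp: InvJ_def)
    have H1: "pfx Hp P1" unfolding P1_def by (rule stay[OF J(1)]) auto
    have n1: "P1 \<noteq> Hp"
    proof
      assume "P1 = Hp"
      then have "(pos = [] \<and> True) \<or> pos = Hp @ [flip (0, False)]" using pmul_eq_H unfolding P1_def by blast
      then show False using J(1) red Hp_not_red by (auto simp: pfx_def Hp_def)
    qed
    have H2: "pfx Hp P2" unfolding P2_def by (rule stay[OF H1]) auto
    have C2: "\<not> pfx (Cp p') P2" for p'
    proof
      assume c: "pfx (Cp p') P2"
      have "\<not> pfx (Cp p') P1"
      proof
        assume "pfx (Cp p') P1"
        then have "pos = Hp \<and> (0::int, False) = (int p' + 1, True)" using enter_C J(2) unfolding P1_def by blast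
        then show False by simp
      qed
      then show False using enter_C[OF _ c[unfolded P2_def]] n1 by blast
    qed
    have E2: "\<not> pfx Ep P2"
    proof
      assume c: "pfx Ep P2"
      have "\<not> pfx Ep P1"
      proof
        assume "pfx Ep P1"
        then have "pos = Hp \<and> (0::int, False) = (-1, True)" using enter_E J(3) unfolding P1_def by blast
        then show False by simp
      qed
      then show False using enter_E[OF _ c[unfolded P2_def]] n1 by blast
    qed
    show ?thesis using H2 C2 E2 by (simp add: InvJ_def)
  qed
  have cC: "InvC G gens A P2 L" if C0: "InvC G gens A pos L"
  proof -
    obtain p' where C: "pfx (Cp p') pos" and rest: "\<exists>p0\<in>set (fst (snd A)). \<exists>u. nfa_path (fst A) p0 u p' \<and>
          word_over (length gens) u \<and> L Hp = piG G gens u" using C0 by (auto simp: InvC_def)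
    have "pfx (Cp p') P1" unfolding P1_def by (rule stay[OF C]) auto
    then have "pfx (Cp p') P2" unfolding P2_def by (rule stay) auto
    then show ?thesis using rest by (auto simp: InvC_def)
  qed
  have cE: "InvE G gens A w P2 L" if E0: "InvE G gens A w pos L"
  proof -
    have E: "pfx Ep pos" using E0 by (simp add: InvE_def)
    have "pfx Ep P1" unfolding P1_def by (rule stay[OF E]) auto
    then have "pfx Ep P2" unfolding P2_def by (rule stay) auto
    then show ?thesis using E0 by (simp add: InvE_def)
  qed
  have goal: "InvO G P2 L \<or> InvJ P2 \<or> InvC G gens A P2 L \<or> InvE G gens A w P2 L"
    using cases cO cJ cC cE by blast
  show ?thesis unfolding e Inv_def using v2 goal by simp
qed

lemma piG_single: "fst a < length gens \<Longrightarrow> piG G gens [a] = gl G gens a"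
  using gl_closed[OF grp gens]
  by (simp add: piG_Cons[OF grp gens] piG_def[of G gens "[]"] monoid.r_one[OF group.is_monoid[OF grp]])

lemma inv_trans: assumes I: "Inv G gens A w s" and t: "(p, a, q) \<in> set (fst A)" and a: "fst a < length gens"
  shows "Inv G gens A w (act G gens (transw (length gens) (p, a, q)) s)"
proof -
  obtain pos L where s: "s = (pos, 0, L)" using I by (cases s) (auto simp: Inv_def)
  have v: "valid G s" using I by (simp add: Inv_def)
  have red: "reduced pos" using v s by (simp add: valid_def)
  define P1 where "P1 = pmul pos (int p + 1, False)"
  define L1 where "L1 = L(P1 := L P1 \<otimes>\<^bsub>G\<^esub> gl G gens a)"
  define P2 where "P2 = pmul P1 (int q + 1, True)"
  have e: "act G gens (transw (length gens) (p, a, q)) s = (P2, 0, L1)" unfolding s P1_def P2_def L1_def by (rule act_trans[OF grp gens a])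
  have v2: "valid G (P2, 0, L1)" using act_valid[OF grp gens v, of "transw (length gens) (p, a, q)"] unfolding e .
  have cases: "InvO G pos L \<or> InvJ pos \<or> InvC G gens A pos L \<or> InvE G gens A w pos L"
    using I s by (simp add: Inv_def)
  have L1H: "L1 Hp = L Hp" if "P1 \<noteq> Hp" using that by (simp add: L1_def)
  have cO: "InvO G P2 L1" if O: "InvO G pos L"
  proof -
    have "\<not> pfx Hp P1" unfolding P1_def by (rule noenter_H) (use O in \<open>auto simp: InvO_def\<close>)
    then have "P1 \<noteq> Hp" by auto
    moreover have "\<not> pfx Hp P2" unfolding P2_def by (rule noenter_H) (use \<open>\<not> pfx Hp P1\<close> in auto)
    ultimately show ?thesis using O L1H by (simp add: InvO_def)
  qed
  have cJ: "InvJ P2" if J0: "InvJ pos"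
  proof -
    have J: "pfx Hp pos" "\<forall>p. \<not> pfx (Cp p) pos" "\<not> pfx Ep pos" using J0 by (auto simp: InvJ_def)
    have n1: "P1 \<noteq> Hp"
    proof
      assume "P1 = Hp"
      then have "(pos = [] \<and> (int p + 1, False) = (0, False)) \<or> pos = Hp @ [flip (int p + 1, False)]" using pmul_eq_H unfolding P1_def by blast
      then have "pos = Cp p" unfolding Hp_flip_Cp by auto
      then show False using J(2) pfx_refl by metis
    qed
    have H1: "pfx Hp P1" unfolding P1_def by (rule stay[OF J(1)]) auto
    have H2: "pfx Hp P2" unfolding P2_def by (rule stay[OF H1]) auto
    have C2: "\<not> pfx (Cp p') P2" for p'
    proof
      assume c: "pfx (Cp p') P2"
      have "\<not> pfx (Cp p') P1"
      proof
        assume "pfx (Cp p') P1"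
        then have "pos = Hp \<and> (int p + 1, False) = (int p' + 1, True)" using enter_C J(2) unfolding P1_def by blast
        then show False by simp
      qed
      then show False using enter_C[OF _ c[unfolded P2_def]] n1 by blast
    qed
    have E2: "\<not> pfx Ep P2"
    proof
      assume c: "pfx Ep P2"
      have "\<not> pfx Ep P1"
      proof
        assume "pfx Ep P1"
        then have "pos = Hp \<and> (int p + 1, False) = (-1, True)" using enter_E J(3) unfolding P1_def by blast
        then show False by simp
      qed
      then show False using enter_E[OF _ c[unfolded P2_def]] n1 by blast
    qed
    show ?thesis using H2 C2 E2 by (simp add: InvJ_def)
  qed
  have cC: "InvC G gens A P2 L1" if C0: "InvC G gens A pos L"
  proof -
    obtain p' p0 u where C: "pfx (Cp p') pos" and p0: "p0 \<in> set (fst (snd A))" and path: "nfa_path (fst A) p0 u p'"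
      and wu: "word_over (length gens) u" and LH: "L Hp = piG G gens u" using C0 by (auto simp: InvC_def)
    show ?thesis
    proof (cases "pos = Cp p' \<and> p' = p")
      case True
      then have P1H: "P1 = Hp" unfolding P1_def using pmul_Cp by simp
      then have P2C: "P2 = Cp q" unfolding P2_def using pmul_Hp_C by simp
      have path': "nfa_path (fst A) p0 (u @ [a]) q" using nfa_path_snoc[OF path] t True by simp
      have wa: "word_over (length gens) [a]" using a by (simp add: word_over_def)
      have wu': "word_over (length gens) (u @ [a])" using wu a by (simp add: word_over_def)
      have "L1 Hp = piG G gens u \<otimes>\<^bsub>G\<^esub> gl G gens a" using P1H LH by (simp add: L1_def)
      also have "\<dots> = piG G gens (u @ [a])" using piG_append[OF wu wa] piG_single[OF a] by simp
      finally have "L1 Hp = piG G gens (u @ [a])" .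
      moreover have "pfx (Cp q) P2" using P2C by simp
      ultimately show ?thesis unfolding InvC_def using path' wu' p0 by blast
    next
      case False
      have "pfx (Cp p') P1" unfolding P1_def by (rule pfx_stay[OF C]) (use False in auto)
      then have "P1 \<noteq> Hp" by (rule pfx_Cp_neq)
      have "pfx (Cp p') P2" unfolding P2_def by (rule stay[OF \<open>pfx (Cp p') P1\<close>]) auto
      then show ?thesis unfolding InvC_def using L1H[OF \<open>P1 \<noteq> Hp\<close>] LH p0 path wu by auto
    qed
  qed
  have cE: "InvE G gens A w P2 L1" if E0: "InvE G gens A w pos L"
  proof -
    have E: "pfx Ep pos" using E0 by (simp add: InvE_def)
    have E1: "pfx Ep P1" unfolding P1_def by (rule stay[OF E]) auto
    then have "P1 \<noteq> Hp" by (rule pfx_Ep_neq)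
    have "pfx Ep P2" unfolding P2_def by (rule stay[OF E1]) auto
    then show ?thesis using E0 L1H[OF \<open>P1 \<noteq> Hp\<close>] by (simp add: InvE_def)
  qed
  have goal: "InvO G P2 L1 \<or> InvJ P2 \<or> InvC G gens A P2 L1 \<or> InvE G gens A w P2 L1"
    using cases cO cJ cC cE by blast
  show ?thesis unfolding e Inv_def fst_conv snd_conv using v2 goal by (intro conjI) auto
qed

lemma inv_fin: assumes I: "Inv G gens A w s" and q: "q \<in> set (snd (snd A))" and ww: "word_over (length gens) w"
  shows "Inv G gens A w (act G gens (finw (length gens) w q) s)"
proof -
  obtain pos L where s: "s = (pos, 0, L)" using I by (cases s) (auto simp: Inv_def)
  have v: "valid G s" using I by (simp add: Inv_def)
  have red: "reduced pos" and Lc: "\<forall>p. L p \<in> carrier G" using v s by (auto simp: valid_def)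
  define P1 where "P1 = pmul pos (int q + 1, False)"
  define L1 where "L1 = L(P1 := L P1 \<otimes>\<^bsub>G\<^esub> piG G gens (invw w))"
  define P2 where "P2 = pmul P1 (-1, True)"
  have e: "act G gens (finw (length gens) w q) s = (P2, 0, L1)" unfolding s P1_def P2_def L1_def by (rule act_fin[OF grp gens ww Lc])
  have v2: "valid G (P2, 0, L1)" using act_valid[OF grp gens v, of "finw (length gens) w q"] unfolding e .
  have cases: "InvO G pos L \<or> InvJ pos \<or> InvC G gens A pos L \<or> InvE G gens A w pos L"
    using I s by (simp add: Inv_def)
  have L1H: "L1 Hp = L Hp" if "P1 \<noteq> Hp" using that by (simp add: L1_def)
  have cO: "InvO G P2 L1" if O: "InvO G pos L"
  proof -
    have "\<not> pfx Hp P1" unfolding P1_def by (rule noenter_H) (use O in \<open>auto simp: InvO_def\<close>)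
    then have "P1 \<noteq> Hp" by auto
    moreover have "\<not> pfx Hp P2" unfolding P2_def by (rule noenter_H) (use \<open>\<not> pfx Hp P1\<close> in auto)
    ultimately show ?thesis using O L1H by (simp add: InvO_def)
  qed
  have cJ: "InvJ P2" if J0: "InvJ pos"
  proof -
    have J: "pfx Hp pos" "\<forall>p. \<not> pfx (Cp p) pos" "\<not> pfx Ep pos" using J0 by (auto simp: InvJ_def)
    have n1: "P1 \<noteq> Hp"
    proof
      assume "P1 = Hp"
      then have "(pos = [] \<and> (int q + 1, False) = (0, False)) \<or> pos = Hp @ [flip (int q + 1, False)]" using pmul_eq_H unfolding P1_def by blast
      then have "pos = Cp q" unfolding Hp_flip_Cp by auto
      then show False using J(2) pfx_refl by metis
    qed
    have H1: "pfx Hp P1" unfolding P1_def by (rule stay[OF J(1)]) auto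
    have H2: "pfx Hp P2" unfolding P2_def by (rule stay[OF H1]) auto
    have C2: "\<not> pfx (Cp p') P2" for p'
    proof
      assume c: "pfx (Cp p') P2"
      have "\<not> pfx (Cp p') P1"
      proof
        assume "pfx (Cp p') P1"
        then have "pos = Hp \<and> (int q + 1, False) = (int p' + 1, True)" using enter_C J(2) unfolding P1_def by blast
        then show False by simp
      qed
      then show False using enter_C[OF _ c[unfolded P2_def]] n1 by blast
    qed
    have E2: "\<not> pfx Ep P2"
    proof
      assume c: "pfx Ep P2"
      have "\<not> pfx Ep P1"
      proof
        assume "pfx Ep P1"
        then have "pos = Hp \<and> (int q + 1, False) = (-1, True)" using enter_E J(3) unfolding P1_def by blast
        then show False by simp
      qed
      then show False using enter_E[OF _ c[unfolded P2_def]] n1 by blast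
    qed
    show ?thesis using H2 C2 E2 by (simp add: InvJ_def)
  qed
  have cC: "InvC G gens A P2 L1 \<or> InvE G gens A w P2 L1" if C0: "InvC G gens A pos L"
  proof -
    obtain p' p0 u where C: "pfx (Cp p') pos" and p0: "p0 \<in> set (fst (snd A))" and path: "nfa_path (fst A) p0 u p'"
      and wu: "word_over (length gens) u" and LH: "L Hp = piG G gens u" using C0 by (auto simp: InvC_def)
    show ?thesis
    proof (cases "pos = Cp p' \<and> p' = q")
      case True
      then have P1H: "P1 = Hp" unfolding P1_def using pmul_Cp by simp
      then have P2E: "P2 = Ep" unfolding P2_def using pmul_Hp_E by simp
      have "L1 Hp = piG G gens u \<otimes>\<^bsub>G\<^esub> piG G gens (invw w)" using P1H LH by (simp add: L1_def)
      then have "InvE G gens A w P2 L1" unfolding InvE_def using P2E path wu p0 q True by auto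
      then show ?thesis by blast
    next
      case False
      have "pfx (Cp p') P1" unfolding P1_def by (rule pfx_stay[OF C]) (use False in auto)
      then have "P1 \<noteq> Hp" by (rule pfx_Cp_neq)
      have "pfx (Cp p') P2" unfolding P2_def by (rule stay[OF \<open>pfx (Cp p') P1\<close>]) auto
      then have "InvC G gens A P2 L1" unfolding InvC_def using L1H[OF \<open>P1 \<noteq> Hp\<close>] LH p0 path wu by auto
      then show ?thesis by blast
    qed
  qed
  have cE: "InvE G gens A w P2 L1" if E0: "InvE G gens A w pos L"
  proof -
    have E: "pfx Ep pos" using E0 by (simp add: InvE_def)
    have E1: "pfx Ep P1" unfolding P1_def by (rule stay[OF E]) auto
    then have "P1 \<noteq> Hp" by (rule pfx_Ep_neq)
    have "pfx Ep P2" unfolding P2_def by (rule stay[OF E1]) auto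
    then show ?thesis using E0 L1H[OF \<open>P1 \<noteq> Hp\<close>] by (simp add: InvE_def)
  qed
  have goal: "InvO G P2 L1 \<or> InvJ P2 \<or> InvC G gens A P2 L1 \<or> InvE G gens A w P2 L1"
    using cases cO cJ cC cE by blast
  show ?thesis unfolding e Inv_def fst_conv snd_conv using v2 goal by (intro conjI) auto
qed

lemma gl_flip: assumes "fst l < length gens" shows "gl G gens (fst l, \<not> snd l) = inv\<^bsub>G\<^esub> (gl G gens l)"
proof -
  have g: "gens ! fst l \<in> carrier G" using assms gens nth_mem by blast
  show ?thesis using g by (cases "snd l") (simp_all add: gl_def group.inv_inv[OF grp])
qed

lemma piG_invw: "word_over (length gens) w \<Longrightarrow> piG G gens (invw w) = inv\<^bsub>G\<^esub> (piG G gens w)"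
proof (induction w)
  case Nil then show ?case by (simp add: piG_def monoid.inv_one[OF group.is_monoid[OF grp]])
next
  case (Cons l w)
  have ww: "word_over (length gens) w" and l: "fst l < length gens" using Cons.prems by (auto simp: word_over_def)
  have wi: "word_over (length gens) (invw w)" using ww by (simp add: word_over_invw)
  have wl: "word_over (length gens) [(fst l, \<not> snd l)]" using l by (simp add: word_over_def)
  have "piG G gens (invw (l # w)) = piG G gens (invw w) \<otimes>\<^bsub>G\<^esub> piG G gens [(fst l, \<not> snd l)]"
    unfolding invw_Cons by (rule piG_append[OF wi wl])
  also have "\<dots> = inv\<^bsub>G\<^esub> (piG G gens w) \<otimes>\<^bsub>G\<^esub> inv\<^bsub>G\<^esub> (gl G gens l)"
    using Cons.IH[OF ww] piG_single[of "(fst l, \<not> snd l)"] l gl_flip[OF l] by simp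
  also have "\<dots> = inv\<^bsub>G\<^esub> (gl G gens l \<otimes>\<^bsub>G\<^esub> piG G gens w)"
    by (rule group.inv_mult_group[OF grp, symmetric]) (auto intro: gl_closed[OF grp gens l] piG_closed[OF grp gens ww])
  also have "\<dots> = inv\<^bsub>G\<^esub> (piG G gens (l # w))" by (simp add: piG_Cons[OF grp gens])
  finally show ?case .
qed

lemma inv_s0: "Inv G gens A w ([], 0, \<lambda>_. \<one>\<^bsub>G\<^esub>)"
proof -
  have "valid G ([], 0, \<lambda>_. \<one>\<^bsub>G\<^esub>)"
    by (simp add: valid_def reduced_def monoid.one_closed[OF group.is_monoid[OF grp]])
  moreover have "InvO G [] (\<lambda>_. \<one>\<^bsub>G\<^esub>)" by (simp add: InvO_def pfx_def Hp_def)
  ultimately show ?thesis by (simp add: Inv_def)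
qed

lemma inv_step: assumes "Inv G gens A w s" "x \<in> set (Xw (length gens) A w)" "nfa_over (length gens) A" "word_over (length gens) w"
  shows "Inv G gens A w (act G gens x s)"
proof -
  have "x \<in> initw (length gens) ` set (fst (snd A)) \<or> x \<in> transw (length gens) ` set (fst A) \<or> x \<in> finw (length gens) w ` set (snd (snd A))"
    using assms(2) by (auto simp: Xw_def)
  moreover
  { fix p assume "p \<in> set (fst (snd A))" "x = initw (length gens) p"
    then have ?thesis using inv_init[OF assms(1)] by simp }
  moreover
  { fix t assume t: "t \<in> set (fst A)" "x = transw (length gens) t"
    obtain p a q where pq: "t = (p, a, q)" by (cases t)
    have "fst a < length gens" using assms(3) t pq by (auto simp: nfa_over_def)
    then have ?thesis using inv_trans[OF assms(1), of p a q] t pq by simp }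
  moreover
  { fix q assume "q \<in> set (snd (snd A))" "x = finw (length gens) w q"
    then have ?thesis using inv_fin[OF assms(1) _ assms(4)] by simp }
  ultimately show ?thesis by blast
qed

lemma inv_concat: "set ws \<subseteq> set (Xw (length gens) A w) \<Longrightarrow> nfa_over (length gens) A \<Longrightarrow> word_over (length gens) w \<Longrightarrow>
  Inv G gens A w s \<Longrightarrow> Inv G gens A w (act G gens (concat ws) s)"
  by (induction ws arbitrary: s) (auto simp: inv_step)

lemma complete_core: assumes "nfa_over (length gens) A" "word_over (length gens) w"
  "set ws \<subseteq> set (Xw (length gens) A w)" "act G gens (concat ws) ([], 0, \<lambda>_. \<one>\<^bsub>G\<^esub>) = (pos, c, L)"
  "pfx Ep pos" "L Hp = \<one>\<^bsub>G\<^esub>"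
  shows "piG G gens w \<in> piG G gens ` nfa_lang A"
proof -
  have I: "Inv G gens A w (pos, c, L)" using inv_concat[OF assms(3,1,2) inv_s0] assms(4) by simp
  have nO: "\<not> InvO G pos L" using assms(5) pfx_Ep_Hp by (auto simp: InvO_def)
  have nJ: "\<not> InvJ pos" using assms(5) by (auto simp: InvJ_def)
  have nC: "\<not> InvC G gens A pos L" using assms(5) pfx_Ep_Cp by (auto simp: InvC_def)
  have "InvE G gens A w pos L" using I nO nJ nC by (simp add: Inv_def)
  then obtain p0 q u where p0: "p0 \<in> set (fst (snd A))" and q: "q \<in> set (snd (snd A))" and path: "nfa_path (fst A) p0 u q"
    and wu: "word_over (length gens) u" and LH: "L Hp = piG G gens u \<otimes>\<^bsub>G\<^esub> piG G gens (invw w)"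
    by (auto simp: InvE_def)
  have "piG G gens u \<otimes>\<^bsub>G\<^esub> inv\<^bsub>G\<^esub> (piG G gens w) = \<one>\<^bsub>G\<^esub>" using LH assms(6) piG_invw[OF assms(2)] by simp
  then have "inv\<^bsub>G\<^esub> (inv\<^bsub>G\<^esub> (piG G gens w)) = piG G gens u"
    by (rule group.inv_equality[OF grp]) (auto intro: piG_closed[OF grp gens] assms(2) wu group.inv_closed[OF grp])
  then have eq: "piG G gens w = piG G gens u" using group.inv_inv[OF grp piG_closed[OF grp gens assms(2)]] by simp
  have "u \<in> nfa_lang A" using p0 q path by (auto simp: nfa_lang_def)
  then show ?thesis using eq by blast
qed

lemma act_xy: assumes "P = [] \<or> last P = (-1, True)"
  shows "act G gens (word_xyinv (length gens)) (P, 0, L) = (P @ Ep, 0, L)"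
proof -
  have a: "pmul P (0, False) = P @ [(0, False)]" using assms by (auto simp: pmul_def)
  have b: "pmul (P @ [(0, False)]) (-1, True) = P @ Ep" by (simp add: pmul_def Ep_def)
  show ?thesis using a b by (simp add: word_xyinv_def)
qed

lemma act_xy_rep: "set ws \<subseteq> {word_xyinv (length gens)} \<Longrightarrow> P = [] \<or> last P = (-1, True) \<Longrightarrow>
  act G gens (concat ws) (P, 0, L) = (P @ concat (replicate (length ws) Ep), 0, L)"
proof (induction ws arbitrary: P)
  case Nil then show ?case by simp
next
  case (Cons x ws)
  have x: "x = word_xyinv (length gens)" using Cons.prems by simp
  have "act G gens (concat (x # ws)) (P, 0, L) = act G gens (concat ws) (P @ Ep, 0, L)"
    using act_xy[OF Cons.prems(2)] x by simp
  also have "\<dots> = ((P @ Ep) @ concat (replicate (length ws) Ep), 0, L)"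
    by (rule Cons.IH) (use Cons.prems in \<open>auto simp: Ep_def\<close>)
  finally show ?case by simp
qed

lemma mon_complete: assumes "nfa_over (length gens) A" "word_over (length gens) w"
  "fp_mon_mem G gens (Xw (length gens) A w) (word_xyinv (length gens))"
  shows "piG G gens w \<in> piG G gens ` nfa_lang A"
proof -
  obtain ws where ws: "set ws \<subseteq> set (Xw (length gens) A w)" "fp_eq G gens (concat ws) (word_xyinv (length gens))"
    using assms(3) by (auto simp: fp_mon_mem_def)
  have v0: "valid G ([], 0, \<lambda>_. \<one>\<^bsub>G\<^esub>)"
    by (simp add: valid_def reduced_def monoid.one_closed[OF group.is_monoid[OF grp]])
  have "act G gens (concat ws) ([], 0, \<lambda>_. \<one>\<^bsub>G\<^esub>) = act G gens (word_xyinv (length gens)) ([], 0, \<lambda>_. \<one>\<^bsub>G\<^esub>)"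
    by (rule fp_eq_act[OF grp gens ws(2) v0])
  also have "\<dots> = (Ep, 0, \<lambda>_. \<one>\<^bsub>G\<^esub>)" using act_xy[of "[]"] by simp
  finally show ?thesis by (rule complete_core[OF assms(1,2) ws(1)]) auto
qed

lemma sgp_complete: assumes "nfa_over (length gens) A" "word_over (length gens) w"
  "\<not> fp_sgp_disjoint G gens (Xw (length gens) A w)"
  shows "piG G gens w \<in> piG G gens ` nfa_lang A"
proof -
  obtain g where g1: "fp_sgp_mem G gens [word_xyinv (length gens)] g" and g2: "fp_sgp_mem G gens (Xw (length gens) A w) g"
    using assms(3) by (auto simp: fp_sgp_disjoint_def)
  obtain ws1 where ws1: "ws1 \<noteq> []" "set ws1 \<subseteq> {word_xyinv (length gens)}" "fp_eq G gens (concat ws1) g"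
    using g1 by (auto simp: fp_sgp_mem_def)
  obtain ws where ws: "set ws \<subseteq> set (Xw (length gens) A w)" "fp_eq G gens (concat ws) g"
    using g2 by (auto simp: fp_sgp_mem_def)
  have v0: "valid G ([], 0, \<lambda>_. \<one>\<^bsub>G\<^esub>)"
    by (simp add: valid_def reduced_def monoid.one_closed[OF group.is_monoid[OF grp]])
  obtain n where n: "length ws1 = Suc n" using ws1(1) by (cases ws1) auto
  have "act G gens (concat ws) ([], 0, \<lambda>_. \<one>\<^bsub>G\<^esub>) = act G gens g ([], 0, \<lambda>_. \<one>\<^bsub>G\<^esub>)"
    by (rule fp_eq_act[OF grp gens ws(2) v0])
  also have "\<dots> = act G gens (concat ws1) ([], 0, \<lambda>_. \<one>\<^bsub>G\<^esub>)"
    by (rule fp_eq_act[OF grp gens fp_sym[OF ws1(3)] v0])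
  also have "\<dots> = (Ep @ concat (replicate n Ep), 0, \<lambda>_. \<one>\<^bsub>G\<^esub>)" using act_xy_rep[OF ws1(2), of "[]"] n by simp
  finally show ?thesis by (rule complete_core[OF assms(1,2) ws(1)]) (auto simp: pfx_def)
qed

lemma fp_cancel_invw: "fp_eq G gens (u @ invw v @ v @ t) (u @ t)"
proof (induction v arbitrary: u t)
  case Nil then show ?case by (simp add: fp_refl)
next
  case (Cons a v)
  have c: "fp_eq G gens ((u @ invw v) @ [(fst a, \<not> snd a), (fst a, \<not> \<not> snd a)] @ (v @ t)) ((u @ invw v) @ (v @ t))"
    by (rule fp_cancel)
  have e: "(u @ invw v) @ [(fst a, \<not> snd a), (fst a, \<not> \<not> snd a)] @ (v @ t) = u @ invw (a # v) @ (a # v) @ t"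
    by (simp add: invw_Cons)
  have "fp_eq G gens (u @ invw (a # v) @ (a # v) @ t) ((u @ invw v) @ (v @ t))" using c unfolding e .
  then show ?case using Cons.IH[of u t] fp_trans by fastforce
qed

lemma path_over: "nfa_over k A \<Longrightarrow> nfa_path (fst A) p u q \<Longrightarrow> word_over k u"
  by (induction u arbitrary: p) (auto simp: word_over_def nfa_over_def)

lemma path_sound: "nfa_path (fst A) p u q \<Longrightarrow> \<exists>ts. set ts \<subseteq> transw (length gens) ` set (fst A) \<and>
  fp_eq G gens (pre @ invw (sw (length gens) p) @ concat ts @ sw (length gens) q @ post) (pre @ u @ post)"
proof (induction u arbitrary: p pre)
  case Nil
  then have "p = q" by simp
  then show ?case using fp_cancel_invw[of pre "sw (length gens) q" post] by (intro exI[of _ "[]"]) simp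
next
  case (Cons a u)
  obtain r where r: "(p, a, r) \<in> set (fst A)" "nfa_path (fst A) r u q" using Cons.prems by auto
  obtain ts where ts: "set ts \<subseteq> transw (length gens) ` set (fst A)"
    "fp_eq G gens ((pre @ [a]) @ invw (sw (length gens) r) @ concat ts @ sw (length gens) q @ post) ((pre @ [a]) @ u @ post)"
    using Cons.IH[OF r(2)] by blast
  let ?ts = "transw (length gens) (p, a, r) # ts"
  have e: "pre @ invw (sw (length gens) p) @ concat ?ts @ sw (length gens) q @ post =
    pre @ invw (sw (length gens) p) @ sw (length gens) p @ ([a] @ invw (sw (length gens) r) @ concat ts @ sw (length gens) q @ post)"
    by simp
  have c: "fp_eq G gens (pre @ invw (sw (length gens) p) @ concat ?ts @ sw (length gens) q @ post)
     ((pre @ [a]) @ invw (sw (length gens) r) @ concat ts @ sw (length gens) q @ post)"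
    unfolding e using fp_cancel_invw[of pre "sw (length gens) p"] by simp
  have "fp_eq G gens (pre @ invw (sw (length gens) p) @ concat ?ts @ sw (length gens) q @ post) (pre @ (a # u) @ post)"
    using fp_trans[OF c ts(2)] by simp
  moreover have "set ?ts \<subseteq> transw (length gens) ` set (fst A)"
    using imageI[OF r(1), of "transw (length gens)"] ts(1) by (simp del: transw.simps)
  ultimately show ?case by blast
qed

lemma sound: assumes "nfa_over (length gens) A" "word_over (length gens) w" "piG G gens w \<in> piG G gens ` nfa_lang A"
  shows "\<exists>ws. ws \<noteq> [] \<and> set ws \<subseteq> set (Xw (length gens) A w) \<and> fp_eq G gens (concat ws) (word_xyinv (length gens))"
proof -
  obtain u where u: "u \<in> nfa_lang A" "piG G gens w = piG G gens u" using assms(3) by auto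
  obtain p0 q where p0: "p0 \<in> set (fst (snd A))" and q: "q \<in> set (snd (snd A))" and path: "nfa_path (fst A) p0 u q"
    using u(1) by (auto simp: nfa_lang_def)
  have wu: "word_over (length gens) u" by (rule path_over[OF assms(1) path])
  let ?k = "length gens"
  obtain ts where ts: "set ts \<subseteq> transw ?k ` set (fst A)"
    "fp_eq G gens ([(?k, False)] @ invw (sw ?k p0) @ concat ts @ sw ?k q @ (invw w @ [(Suc ?k, True)])) ([(?k, False)] @ u @ (invw w @ [(Suc ?k, True)]))"
    using path_sound[OF path] by blast
  let ?ws = "initw ?k p0 # ts @ [finw ?k w q]"
  have e: "concat ?ws = [(?k, False)] @ invw (sw ?k p0) @ concat ts @ sw ?k q @ (invw w @ [(Suc ?k, True)])"
    by (simp add: initw_def finw_def)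
  have wiw: "word_over ?k (invw w)" using assms(2) word_over_invw by simp
  have wr: "word_over ?k (u @ invw w)" using wu wiw by (auto simp: word_over_def)
  have pr: "piG G gens (u @ invw w) = \<one>\<^bsub>G\<^esub>"
    using piG_append[OF wu] word_over_invw assms(2) piG_invw[OF assms(2)] u(2)
      group.r_inv[OF grp piG_closed[OF grp gens assms(2)]] by simp
  have r: "fp_eq G gens ([(?k, False)] @ (u @ invw w) @ [(Suc ?k, True)]) ([(?k, False)] @ [(Suc ?k, True)])"
    by (rule fp_rel[OF wr pr])
  have "fp_eq G gens (concat ?ws) (word_xyinv ?k)"
    unfolding e using fp_trans[OF ts(2)] r by (simp add: word_xyinv_def)
  moreover have "set ?ws \<subseteq> set (Xw ?k A w)" using ts(1) p0 q by (auto simp: Xw_def)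
  ultimately show ?thesis by blast
qed

end




definition swl :: "nat \<Rightarrow> nat \<Rightarrow> nat list" where
  "swl k p = replicate (Suc p) (enc_letter (Suc (Suc k), False)) @ enc_letter (k, False) # replicate (Suc p) (enc_letter (Suc (Suc k), True))"
definition iswl :: "nat \<Rightarrow> nat \<Rightarrow> nat list" where
  "iswl k p = replicate (Suc p) (enc_letter (Suc (Suc k), False)) @ enc_letter (k, True) # replicate (Suc p) (enc_letter (Suc (Suc k), True))"
definition flipc :: "nat \<Rightarrow> nat" where
  "flipc e = prod_encode (fst (prod_decode e), 1 - snd (prod_decode e))"

lemma map_sw: "map enc_letter (sw k p) = swl k p"
  by (simp add: sw_def zsw_def swl_def)
lemma map_isw: "map enc_letter (invw (sw k p)) = iswl k p"
  by (simp add: invw_sw zsw_def iswl_def)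
lemma flipc_enc: "flipc (enc_letter l) = enc_letter (fst l, \<not> snd l)"
  by (cases l) (simp add: flipc_def enc_letter_def)
lemma map_invw: "map enc_letter (invw w) = rev (map flipc (map enc_letter w))"
  by (simp add: invw_def rev_map flipc_enc comp_def)

definition Ic :: "nat \<Rightarrow> nat" where "Ic n = fst (prod_decode (snd (prod_decode (fst (prod_decode n)))))"
definition Fc :: "nat \<Rightarrow> nat" where "Fc n = snd (prod_decode (snd (prod_decode (fst (prod_decode n)))))"
definition Tc :: "nat \<Rightarrow> nat" where "Tc n = fst (prod_decode (fst (prod_decode n)))"
definition Wc :: "nat \<Rightarrow> nat" where "Wc n = snd (prod_decode n)"

definition gI :: "nat \<Rightarrow> nat list \<Rightarrow> nat" where
  "gI k ys = enc_list (enc_letter (k, False) # iswl k (ys!0))"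
definition gT :: "nat \<Rightarrow> nat list \<Rightarrow> nat" where
  "gT k ys = enc_list (swl k (fst (prod_decode (ys!0))) @ [fst (prod_decode (snd (prod_decode (ys!0))))] @
     iswl k (snd (prod_decode (snd (prod_decode (ys!0))))))"
definition gF :: "nat \<Rightarrow> nat list \<Rightarrow> nat" where
  "gF k ys = enc_list (swl k (ys!0) @ rev (map flipc (dec (Wc (ys!1)))) @ [enc_letter (Suc k, True)])"

definition Red :: "nat \<Rightarrow> nat list \<Rightarrow> nat list" where
  "Red k xs = map (\<lambda>x. gI k (x # xs)) (dec (Ic (xs!0))) @ map (\<lambda>x. gT k (x # xs)) (dec (Tc (xs!0))) @
     map (\<lambda>x. gF k (x # xs)) (dec (Fc (xs!0)))"

lemma cfun_el: "cfun n (\<lambda>xs. enc_letter l)" by (rule cfun_const)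

lemma clist_swl: "cfun n P \<Longrightarrow> clist n (\<lambda>xs. swl k (P xs))"
  unfolding swl_def
  by (intro clist_app clist_rep clist_cons cfun_Suc cfun_const) auto

lemma clist_iswl: "cfun n P \<Longrightarrow> clist n (\<lambda>xs. iswl k (P xs))"
  unfolding iswl_def
  by (intro clist_app clist_rep clist_cons cfun_Suc cfun_const) auto

lemma cfun_flipc: "cfun n P \<Longrightarrow> cfun n (\<lambda>xs. flipc (P xs))"
  unfolding flipc_def by (intro cfun_pe cfun_pd1 cfun_pd2 cfun_sub cfun_const)

lemma cfun_gI: "cfun 2 (gI k)"
proof -
  have "clist 2 (\<lambda>ys. enc_letter (k, False) # iswl k (ys!0))"
    by (intro clist_cons cfun_const clist_iswl cfun_proj) simp
  then show ?thesis unfolding clist_def gI_def by simp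
qed

lemma cfun_gT: "cfun 2 (gT k)"
proof -
  have "clist 2 (\<lambda>ys. swl k (fst (prod_decode (ys!0))) @ [fst (prod_decode (snd (prod_decode (ys!0))))] @
     iswl k (snd (prod_decode (snd (prod_decode (ys!0))))))"
    by (intro clist_app clist_swl clist_iswl clist_cons clist_nil cfun_pd1 cfun_pd2 cfun_proj) simp_all
  then show ?thesis unfolding clist_def gT_def by simp
qed

lemma cfun_gF: "cfun 2 (gF k)"
proof -
  have m: "clist 2 (\<lambda>ys. map (\<lambda>x. (\<lambda>zs. flipc (zs!0)) (x # ys)) (dec (Wc (ys!1))))"
    unfolding Wc_def
    by (intro clist_map clist_dec cfun_flipc cfun_proj cfun_pd2) simp_all
  have "clist 2 (\<lambda>ys. swl k (ys!0) @ rev (map flipc (dec (Wc (ys!1)))) @ [enc_letter (Suc k, True)])"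
    by (intro clist_app clist_swl clist_rev clist_cons clist_nil cfun_const cfun_proj) (use m in simp_all)
  then show ?thesis unfolding clist_def gF_def by simp
qed

lemma cfun_Red: "cfun 1 (\<lambda>xs. enc_list (Red k xs))"
proof -
  have "clist 1 (Red k)" unfolding Red_def Ic_def Tc_def Fc_def
    by (intro clist_app clist_map cfun_gI[unfolded numeral_2_eq_2] cfun_gT[unfolded numeral_2_eq_2] cfun_gF[unfolded numeral_2_eq_2]
      clist_dec cfun_pd1 cfun_pd2 cfun_proj)
      (simp_all add: cfun_gI[unfolded numeral_2_eq_2] cfun_gT[unfolded numeral_2_eq_2] cfun_gF[unfolded numeral_2_eq_2])
  then show ?thesis by (simp add: clist_def)
qed

lemma map_map_cong': "(\<And>x. x \<in> set xs \<Longrightarrow> f (g x) = h x) \<Longrightarrow> map f (map g xs) = map h xs"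
  by (induction xs) auto

lemma Red_correct: "enc_list (Red k [prod_encode (enc_nfa A, enc_word w)]) = enc_words (Xw k A w)"
proof -
  let ?n = "prod_encode (enc_nfa A, enc_word w)"
  let ?tc = "\<lambda>(p, a, q). prod_encode (p, prod_encode (enc_letter a, q))"
  have dI: "dec (Ic ?n) = fst (snd A)" by (simp add: Ic_def enc_nfa_def)
  have dT: "dec (Tc ?n) = map ?tc (fst A)" by (simp add: Tc_def enc_nfa_def)
  have dF: "dec (Fc ?n) = snd (snd A)" by (simp add: Fc_def enc_nfa_def)
  have i: "gI k (p # [?n]) = enc_word (initw k p)" for p
    by (simp add: gI_def enc_word_def initw_def map_isw)
  have t: "gT k (prod_encode (p, prod_encode (enc_letter a, q)) # [?n]) = enc_word (transw k (p, a, q))" for p a q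
    by (simp add: gT_def enc_word_def map_sw map_isw)
  have t': "gT k (?tc x # [?n]) = enc_word (transw k x)" for x
    by (cases x) (simp add: t)
  have f: "gF k (q # [?n]) = enc_word (finw k w q)" for q
    by (simp add: gF_def Wc_def enc_word_def finw_def map_sw map_invw)
  have mT: "map (\<lambda>x. gT k (x # [?n])) (map ?tc (fst A)) = map (\<lambda>x. enc_word (transw k x)) (fst A)"
    by (rule map_map_cong') (rule t')
  have "Red k [?n] = map enc_word (Xw k A w)"
    unfolding Red_def nth_Cons_0 dI dT dF mT using i f by (simp add: Xw_def)
  then show ?thesis by (simp add: enc_words_def)
qed

lemma dec_comp: assumes r: "\<forall>x\<in>V. eval r [g x] (D x)" and cF: "cfun 1 (\<lambda>xs. F (xs!0))"
  and cQ: "cfun 1 (\<lambda>xs. Q (xs!0))" and FG: "\<forall>x\<in>V. F (enc x) = g x"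
  shows "\<exists>r'. \<forall>x\<in>V. eval r' [enc x] (Q (D x))"
proof -
  obtain rf where rf: "\<forall>xs. length xs = 1 \<longrightarrow> eval rf xs (F (xs!0))" using cF by (auto simp: cfun_def)
  obtain rq where rq: "\<forall>xs. length xs = 1 \<longrightarrow> eval rq xs (Q (xs!0))" using cQ by (auto simp: cfun_def)
  have "eval (Comp rq [Comp r [rf]]) [enc x] (Q (D x))" if x: "x \<in> V" for x
  proof -
    have e1: "eval rf [enc x] (F (enc x))" using rf[rule_format, of "[enc x]"] by simp
    have e2: "eval r [F (enc x)] (D x)" using r x FG by simp
    have e3: "eval (Comp r [rf]) [enc x] (D x)" by (rule eval_Comp[where ys="[F (enc x)]"]) (use e1 e2 in auto)
    have e4: "eval rq [D x] (Q (D x))" using rq[rule_format, of "[D x]"] by simp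
    show ?thesis by (rule eval_Comp[where ys="[D x]"]) (use e3 e4 in auto)
  qed
  then show ?thesis by blast
qed

lemma Xw_over: assumes A: "nfa_over k A" and w: "word_over k w" and x: "x \<in> set (Xw k A w)"
  shows "word_over (k + 3) x"
proof -
  have s1: "word_over (k + 3) (sw k p)" for p by (auto simp: word_over_def sw_def zsw_def)
  have s2: "word_over (k + 3) (invw (sw k p))" for p by (auto simp: word_over_def invw_sw zsw_def)
  have wi: "word_over (k + 3) (invw w)" using w word_over_invw[of k w] by (auto simp: word_over_def)
  consider (i) p where "x = initw k p" | (t) p a q where "(p, a, q) \<in> set (fst A)" "x = transw k (p, a, q)"
    | (f) q where "x = finw k w q" using x by (auto simp: Xw_def)
  then show ?thesis
  proof cases
    case i then show ?thesis using s2 by (auto simp: initw_def word_over_def)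
  next
    case t
    have "fst a < k" using A t(1) by (auto simp: nfa_over_def)
    then show ?thesis using t s1 s2 by (auto simp: word_over_def)
  next
    case f then show ?thesis using s1 wi by (auto simp: finw_def word_over_def)
  qed
qed

theorem mainTheorem2:
  fixes G :: "('a, 'b) monoid_scheme" and gens :: "'a list"
  assumes "group G"
    and "set gens \<subseteq> carrier G"
    and "generate G (set gens) = carrier G"
  shows "(FT_submonoid_xyinv_decidable G gens \<longrightarrow> rational_membership_decidable G gens)
       \<and> (sgp_disjoint_decidable G gens \<longrightarrow> rational_membership_decidable G gens)"
proof -
  note grp = assms(1) and gens = assms(2)
  let ?k = "length gens"
  let ?enc = "\<lambda>x. prod_encode (enc_nfa (fst x), enc_word (snd x))"
  let ?V = "{(A, w). nfa_over ?k A \<and> word_over ?k w}"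
  let ?P = "\<lambda>x. piG G gens (snd x) \<in> piG G gens ` nfa_lang (fst x)"
  let ?X = "\<lambda>x. Xw ?k (fst x) (snd x)"
  let ?VX = "{X. \<forall>w\<in>set X. word_over (length gens + 3) w}"
  define F where "F n = enc_list (Red ?k [n])" for n
  have cF: "cfun 1 (\<lambda>xs. F (xs!0))"
    using cfun_Red[of ?k] by (rule cfun_cong) (case_tac xs, auto simp: F_def)
  have FX: "\<forall>x\<in>?V. F (?enc x) = enc_words (?X x)" using Red_correct by (auto simp: F_def)
  have XV: "?X x \<in> ?VX" if "x \<in> ?V" for x using that Xw_over by (auto simp: case_prod_beta)
  have i1: "fp_mon_mem G gens (?X x) (word_xyinv ?k) \<longleftrightarrow> ?P x" if x: "x \<in> ?V" for x
  proof
    assume "fp_mon_mem G gens (?X x) (word_xyinv ?k)"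
    moreover have xA: "nfa_over ?k (fst x)" "word_over ?k (snd x)" using x by (auto simp: case_prod_beta)
    ultimately show "?P x" using mon_complete[OF grp gens] by blast
  next
    assume P: "?P x"
    have xA: "nfa_over ?k (fst x)" "word_over ?k (snd x)" using x by (auto simp: case_prod_beta)
    obtain ws where "set ws \<subseteq> set (?X x)" "fp_eq G gens (concat ws) (word_xyinv ?k)"
      using sound[OF grp gens xA P] by blast
    then show "fp_mon_mem G gens (?X x) (word_xyinv ?k)" by (auto simp: fp_mon_mem_def)
  qed
  have i2: "\<not> fp_sgp_disjoint G gens (?X x) \<longleftrightarrow> ?P x" if x: "x \<in> ?V" for x
  proof
    assume "\<not> fp_sgp_disjoint G gens (?X x)"
    moreover have xA: "nfa_over ?k (fst x)" "word_over ?k (snd x)" using x by (auto simp: case_prod_beta)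
    ultimately show "?P x" using sgp_complete[OF grp gens] by blast
  next
    assume "?P x"
    have xA: "nfa_over ?k (fst x)" "word_over ?k (snd x)" using x by (auto simp: case_prod_beta)
    obtain ws where ws: "ws \<noteq> []" "set ws \<subseteq> set (?X x)" "fp_eq G gens (concat ws) (word_xyinv ?k)"
      using sound[OF grp gens xA \<open>?P x\<close>] by blast
    have "fp_sgp_mem G gens (?X x) (word_xyinv ?k)" using ws by (auto simp: fp_sgp_mem_def)
    moreover have "fp_sgp_mem G gens [word_xyinv ?k] (word_xyinv ?k)"
      unfolding fp_sgp_mem_def by (rule exI[of _ "[word_xyinv ?k]"]) (auto intro: fp_refl)
    ultimately show "\<not> fp_sgp_disjoint G gens (?X x)" by (auto simp: fp_sgp_disjoint_def)
  qed
  have goal: "rational_membership_decidable G gens" if "\<exists>r'. \<forall>x\<in>?V. eval r' [?enc x] (if ?P x then 1 else 0)"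
  proof -
    from that obtain r' where r': "\<forall>x\<in>?V. eval r' [?enc x] (if ?P x then 1 else 0)" by blast
    show ?thesis unfolding rational_membership_decidable_def decidable_def
    proof (intro exI[of _ r'] ballI)
      fix x assume "x \<in> ?V"
      then have "eval r' [?enc x] (if ?P x then 1 else 0)" using r' by blast
      then show "eval r' [(\<lambda>(A, w). prod_encode (enc_nfa A, enc_word w)) x]
        (if (\<lambda>(A, w). piG G gens w \<in> piG G gens ` nfa_lang A) x then 1 else 0)" by (simp add: case_prod_beta)
    qed
  qed
  show ?thesis
  proof (intro conjI impI)
    assume "FT_submonoid_xyinv_decidable G gens"
    then obtain r where r: "\<forall>X\<in>?VX. eval r [enc_words X] (if fp_mon_mem G gens X (word_xyinv ?k) then 1 else 0)"
      by (auto simp: FT_submonoid_xyinv_decidable_def decidable_def)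
    have r2: "\<forall>x\<in>?V. eval r [enc_words (?X x)] (if fp_mon_mem G gens (?X x) (word_xyinv ?k) then 1 else 0)"
      using r XV by blast
    obtain r' where r': "\<forall>x\<in>?V. eval r' [?enc x] ((\<lambda>v. v) (if fp_mon_mem G gens (?X x) (word_xyinv ?k) then 1 else 0))"
      using dec_comp[OF r2 cF _ FX, of "\<lambda>v. v"] cfun_proj[of 0 1] by auto
    have "\<forall>x\<in>?V. eval r' [?enc x] (if ?P x then 1 else 0)"
    proof
      fix x assume x: "x \<in> ?V"
      have "eval r' [?enc x] (if fp_mon_mem G gens (?X x) (word_xyinv ?k) then 1 else 0)" using r' x by blast
      then show "eval r' [?enc x] (if ?P x then 1 else 0)" using i1[OF x] by simp
    qed
    then show "rational_membership_decidable G gens" by (intro goal exI)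
  next
    assume "sgp_disjoint_decidable G gens"
    then obtain r where r: "\<forall>X\<in>?VX. eval r [enc_words X] (if fp_sgp_disjoint G gens X then 1 else 0)"
      by (auto simp: sgp_disjoint_decidable_def decidable_def)
    have r2: "\<forall>x\<in>?V. eval r [enc_words (?X x)] (if fp_sgp_disjoint G gens (?X x) then 1 else 0)"
      using r XV by blast
    have cQ: "cfun 1 (\<lambda>xs. 1 - xs!0)" by (intro cfun_sub cfun_const cfun_proj) simp
    obtain r' where r': "\<forall>x\<in>?V. eval r' [?enc x] ((\<lambda>v. 1 - v) (if fp_sgp_disjoint G gens (?X x) then 1 else 0))"
      using dec_comp[OF r2 cF cQ FX] by auto
    have "\<forall>x\<in>?V. eval r' [?enc x] (if ?P x then 1 else 0)"
    proof
      fix x assume x: "x \<in> ?V"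
      have "eval r' [?enc x] (1 - (if fp_sgp_disjoint G gens (?X x) then 1 else 0))" using r' x by blast
      then show "eval r' [?enc x] (if ?P x then 1 else 0)" using i2[OF x] by (cases "fp_sgp_disjoint G gens (?X x)") simp_all
    qed
    then show "rational_membership_decidable G gens" by (intro goal exI)
  qed
qed


end
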